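(* Let $p,q$ be coprime positive integers and $n$ an integer with $1\le n\le q$. If $p$ and $n$ are coprime, then \[ \mathrm{vu}(VT_{p,q}^n)\ge \frac{(p-1)(q-n)}{2}. \]
   Context: Braid conventions: braids on $p$ strands are drawn horizontally, oriented left to right, with positions $1,\dots,p$ numbered from top to bottom, and words are read left to right. The generator $\sigma_m$ is a classical crossing at which the strand in position $m$ moves to position $m+1$, passing over the strand moving from position $m+1$ to position $m$. A virtual crossing is drawn with a small circle and has no over/under information. The standard $(p,q)$-torus knot diagram is the closure of $(\sigma_1\cdots\sigma_{p-1})^q$. In each of the $q$ blocks $\sigma_1\cdots\sigma_{p-1}$, one strand (an overstrand) passes over all other strands. $VT^n_{p,q}$ is the virtual knot whose diagram is the closure of the braid obtained by replacing by virtual crossings all crossings of the first $n$ blocks, i.e. the crossings on the overstrands $a_1,\dots,a_n$ taken in the canonical order. Virtual knots are considered up to generalized Reidemeister moves: classical R1–R3, virtual VR1–VR3 and mixed MR. A crossing change switches a classical crossing. $VT^n_{p,q}$ is virtually null-homotopic, i.e. it can be turned into the unknot by these moves and crossing changes. $\mathrm{vu}$ denotes the minimal number of crossing changes needed to do so (the virtual unknotting number). *)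

theory Defs
  imports Main "HOL-Library.Extended_Nat"
begin

text \<open>A virtual knot diagram is represented by its (signed) Gauss code: the cyclic
sequence of classical crossings met when travelling once along the knot.  Virtual crossings do not appear, so the
virtual moves VR1-VR3 and the mixed move MR act trivially on Gauss codes; virtual knots
are equivalence classes of Gauss codes modulo the Reidemeister moves below
(Goussarov-Polyak-Viro).\<close>

datatype gletter = GL (lab: nat) (over: bool) (positive: bool)

type_synonym gcode = "gletter list"

definition labels :: "gcode \<Rightarrow> nat set" where
  "labels w = lab ` set w"

text \<open>R1, deletion direction: a kink (adjacent over/under passages of one crossing,
any order, any sign).\<close>
definition r1_del :: "gcode \<Rightarrow> gcode \<Rightarrow> bool" where
  "r1_del w w' \<longleftrightarrow> (\<exists>x y a ov s. w = x @ [GL a ov s, GL a (\<not> ov) s] @ y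
      \<and> w' = x @ y \<and> a \<notin> labels w')"

text \<open>R2, deletion direction: a bigon; crossings a, b have opposite signs, the over
strand meets a then b, the under strand meets them in either order.\<close>
definition r2_del :: "gcode \<Rightarrow> gcode \<Rightarrow> bool" where
  "r2_del w w' \<longleftrightarrow> (\<exists>x y z a b sa sb P Q. a \<noteq> b \<and> sa \<noteq> sb
      \<and> P = [GL a True sa, GL b True sb]
      \<and> (Q = [GL a False sa, GL b False sb] \<or> Q = [GL b False sb, GL a False sa])
      \<and> (w = x @ P @ y @ Q @ z \<or> w = x @ Q @ y @ P @ z)
      \<and> w' = x @ y @ z \<and> a \<notin> labels w' \<and> b \<notin> labels w')"

text \<open>R3: top strand T passes over middle M (crossing a) and bottom B (crossing b),
M passes over B (crossing c).  The Booleans t, m, bt say whether T meets a before b,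
M meets a before c, B meets b before c; these orders are determined by the signs as
below.\<close>
definition r3 :: "gcode \<Rightarrow> gcode \<Rightarrow> bool" where
  "r3 w w' \<longleftrightarrow> (\<exists>x y z v A B C a b c sa sb sc t m bt.
      distinct [a, b, c]
      \<and> ((t = m) = (sb = sc)) \<and> ((t = bt) = (sa = sc))
      \<and> {A, B, C} =
         {(if t then [GL a True sa, GL b True sb] else [GL b True sb, GL a True sa]),
          (if m then [GL a False sa, GL c True sc] else [GL c True sc, GL a False sa]),
          (if bt then [GL b False sb, GL c False sc] else [GL c False sc, GL b False sb])}
      \<and> w = x @ A @ y @ B @ z @ C @ v
      \<and> w' = x @ rev A @ y @ rev B @ z @ rev C @ v)"

text \<open>One elementary move (including change of base point and renaming of crossings).\<close>
definition gmove :: "gcode \<Rightarrow> gcode \<Rightarrow> bool" where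
  "gmove w w' \<longleftrightarrow> w' = rotate1 w
     \<or> (\<exists>f. inj f \<and> w' = map (\<lambda>l. GL (f (lab l)) (over l) (positive l)) w)
     \<or> r1_del w w' \<or> r2_del w w' \<or> r3 w w'"

definition xchange :: "gcode \<Rightarrow> gcode \<Rightarrow> bool" where
  "xchange w w' \<longleftrightarrow> (\<exists>a \<in> labels w.
     w' = map (\<lambda>l. if lab l = a then GL a (\<not> over l) (\<not> positive l) else l) w)"

inductive reach :: "gcode \<Rightarrow> nat \<Rightarrow> gcode \<Rightarrow> bool" where
  refl: "reach w 0 w"
| move: "gmove w w' \<or> gmove w' w \<Longrightarrow> reach w' k w'' \<Longrightarrow> reach w k w''"
| change: "xchange w w' \<Longrightarrow> reach w' k w'' \<Longrightarrow> reach w (Suc k) w''"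

text \<open>Virtual unknotting number (infinity if not virtually null-homotopic); the unknot
is the empty Gauss code.\<close>
definition vu :: "gcode \<Rightarrow> enat" where
  "vu D = (INF k \<in> {k. reach D k []}. enat k)"

text \<open>Cl m = sigma_m (strand in position m moves to m+1 passing over);
Vi m = virtual crossing between positions m and m+1.\<close>
datatype bletter = Cl nat | Vi nat

text \<open>Follow one strand through the braid word, starting in position posn; the crossing
label is the index of the letter in the word.  All sigma_m crossings are positive.\<close>
fun pass :: "bletter list \<Rightarrow> nat \<Rightarrow> nat \<Rightarrow> gcode \<times> nat" where
  "pass [] k posn = ([], posn)"
| "pass (Cl m # w) k posn =
     (if posn = m then (let r = pass w (Suc k) (Suc m) in (GL k True True # fst r, snd r))
      else if posn = Suc m then (let r = pass w (Suc k) m in (GL k False True # fst r, snd r))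
      else pass w (Suc k) posn)"
| "pass (Vi m # w) k posn =
     pass w (Suc k) (if posn = m then Suc m else if posn = Suc m then m else posn)"

fun traverse :: "bletter list \<Rightarrow> nat \<Rightarrow> nat \<Rightarrow> gcode" where
  "traverse w 0 posn = []"
| "traverse w (Suc r) posn = fst (pass w 0 posn) @ traverse w r (snd (pass w 0 posn))"

text \<open>Gauss code of the closure of a braid word on p strands which closes to a knot:
start at position 1 and run through the braid p times.\<close>
definition closure_code :: "nat \<Rightarrow> bletter list \<Rightarrow> gcode" where
  "closure_code p w = traverse w p 1"

text \<open>The braid word (sigma_1 ... sigma_{p-1})^q with the crossings of the first n
blocks replaced by virtual crossings.\<close>
definition VT_braid :: "nat \<Rightarrow> nat \<Rightarrow> nat \<Rightarrow> bletter list" where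
  "VT_braid n p q = concat (map (\<lambda>i. map (if i < n then Vi else Cl) [1..<p]) [0..<q])"

definition VT :: "nat \<Rightarrow> nat \<Rightarrow> nat \<Rightarrow> gcode" where
  "VT n p q = closure_code p (VT_braid n p q)"

end

theory Submission
  imports Defs
begin


definition val :: "gletter \<Rightarrow> int" where
  "val l = (if positive l = over l then 1 else -1)"
definition sumv :: "gcode \<Rightarrow> int" where
  "sumv w = sum_list (map val w)"
definition sg :: "gletter \<Rightarrow> int" where
  "sg l = (if positive l then 1 else -1)"
definition ind :: "gcode \<Rightarrow> nat \<Rightarrow> int" where
  "ind w d = (case dropWhile (\<lambda>l. lab l \<noteq> d) w of [] \<Rightarrow> 0
     | e # r \<Rightarrow> (if over e then 1 else -1) * sumv (takeWhile (\<lambda>l. lab l \<noteq> d) r))"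
definition Nf :: "gcode \<Rightarrow> gletter \<Rightarrow> int" where
  "Nf w l = (if over l \<and> ind w (lab l) \<noteq> 0 then sg l else 0)"
definition NN :: "gcode \<Rightarrow> int" where
  "NN w = sum_list (map (Nf w) w)"
definition wf :: "gcode \<Rightarrow> bool" where
  "wf w \<longleftrightarrow> (\<forall>a\<in>labels w. \<exists>ov s. filter (\<lambda>l. lab l = a) w = [GL a ov s, GL a (\<not> ov) s])"

lemma sumv_simps[simp]: "sumv [] = 0" "sumv (x # xs) = val x + sumv xs"
  "sumv (xs @ ys) = sumv xs + sumv ys" "sumv (rev xs) = sumv xs"
  by (auto simp: sumv_def rev_map[symmetric] sum_list_rev)

lemma labels_simps[simp]: "labels [] = {}" "labels (x # xs) = insert (lab x) (labels xs)"
  "labels (xs @ ys) = labels xs \<union> labels ys" "labels (rev xs) = labels xs"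
  by (auto simp: labels_def)

lemma ind_decomp:
  assumes "d \<notin> labels x" "d \<notin> labels y" "lab e1 = d" "lab e2 = d"
  shows "ind (x @ e1 # y @ e2 # z) d = (if over e1 then 1 else -1) * sumv y"
proof -
  have "dropWhile (\<lambda>l. lab l \<noteq> d) (x @ e1 # y @ e2 # z) = e1 # y @ e2 # z"
    using assms by (subst dropWhile_append2) (auto simp: labels_def image_iff)
  moreover have "takeWhile (\<lambda>l. lab l \<noteq> d) (y @ e2 # z) = y"
    using assms by (subst takeWhile_append2) (auto simp: labels_def image_iff)
  ultimately show ?thesis by (simp add: ind_def)
qed

lemma ind_repl:
  assumes "\<forall>l\<in>set B. lab l \<noteq> d" "\<forall>l\<in>set B'. lab l \<noteq> d" "sumv B = sumv B'"
  shows "ind (u @ B @ v) d = ind (u @ B' @ v) d"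
proof (cases "\<forall>l\<in>set u. lab l \<noteq> d")
  case True
  then show ?thesis using assms by (simp add: ind_def)
next
  case False
  then obtain e r0 where e: "dropWhile (\<lambda>l. lab l \<noteq> d) u = e # r0"
    by (metis (mono_tags, lifting) dropWhile_eq_Nil_conv list.exhaust)
  have "dropWhile (\<lambda>l. lab l \<noteq> d) (u @ X) = e # r0 @ X" for X
    using False e by (auto simp add: dropWhile_append)
  then show ?thesis using assms
    by (simp add: ind_def takeWhile_append)
qed

lemma filter0: "filter (\<lambda>l. lab l = a) w = [] \<Longrightarrow> a \<notin> labels w"
  by (auto simp: labels_def filter_empty_conv)

lemma filter1: "filter (\<lambda>l. lab l = a) w = [e] \<Longrightarrow>
   \<exists>y z. w = y @ e # z \<and> a \<notin> labels y \<and> a \<notin> labels z"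
proof -
  assume "filter (\<lambda>l. lab l = a) w = [e]"
  from filter_eq_ConsD[OF this] obtain us vs where h: "w = us @ e # vs" "\<forall>u\<in>set us. lab u \<noteq> a" "lab e = a"
    "[] = filter (\<lambda>l. lab l = a) vs"
    by blast
  from h(4) have "filter (\<lambda>l. lab l = a) vs = []" by simp
  then have "\<forall>x\<in>set vs. lab x \<noteq> a" by (simp add: filter_empty_conv)
  with h show ?thesis by (intro exI[of _ us] exI[of _ vs]) (auto simp: labels_def)
qed

lemma filter2: "filter (\<lambda>l. lab l = a) w = [e1, e2] \<Longrightarrow>
   \<exists>x y z. w = x @ e1 # y @ e2 # z \<and> a \<notin> labels x \<and> a \<notin> labels y \<and> a \<notin> labels z"
proof -
  assume "filter (\<lambda>l. lab l = a) w = [e1, e2]"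
  from filter_eq_ConsD[OF this] obtain us vs where h: "w = us @ e1 # vs" "\<forall>u\<in>set us. lab u \<noteq> a" "lab e1 = a"
    "[e2] = filter (\<lambda>l. lab l = a) vs"
    by blast
  from filter1[of a vs e2] h(4) obtain y z where "vs = y @ e2 # z" "a \<notin> labels y" "a \<notin> labels z"
    by auto
  with h show ?thesis by (intro exI[of _ us] exI[of _ y] exI[of _ z]) (auto simp: labels_def)
qed

lemma sum_by_label:
  fixes f :: "gletter \<Rightarrow> int"
  assumes "finite S" "labels w \<subseteq> S"
  shows "sum_list (map f w) = (\<Sum>a\<in>S. sum_list (map f (filter (\<lambda>l. lab l = a) w)))"
  using assms(2)
proof (induction w)
  case Nil then show ?case by simp
next
  case (Cons x w)
  have "(\<Sum>a\<in>S. sum_list (map f (filter (\<lambda>l. lab l = a) (x # w))))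
      = (\<Sum>a\<in>S. (if lab x = a then f x else 0) + sum_list (map f (filter (\<lambda>l. lab l = a) w)))"
    by (intro sum.cong) auto
  also have "\<dots> = f x + (\<Sum>a\<in>S. sum_list (map f (filter (\<lambda>l. lab l = a) w)))"
    using Cons.prems assms(1) by (simp add: sum.distrib)
  finally show ?case using Cons by simp
qed

lemma finite_labels[simp]: "finite (labels w)"
  by (simp add: labels_def)

lemma wf_sumv: assumes "wf w" shows "sumv w = 0"
proof -
  have "sumv w = (\<Sum>a\<in>labels w. sum_list (map val (filter (\<lambda>l. lab l = a) w)))"
    unfolding sumv_def by (rule sum_by_label) auto
  also have "\<dots> = 0"
  proof (rule sum.neutral, rule ballI)
    fix a assume "a \<in> labels w"
    then obtain ov s where "filter (\<lambda>l. lab l = a) w = [GL a ov s, GL a (\<not> ov) s]"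
      using assms by (auto simp: wf_def)
    then show "sum_list (map val (filter (\<lambda>l. lab l = a) w)) = 0"
      by (auto simp: val_def)
  qed
  finally show ?thesis .
qed

lemma wf_decomp:
  assumes "wf w" "a \<in> labels w"
  obtains x y z ov s where "w = x @ GL a ov s # y @ GL a (\<not> ov) s # z"
    "a \<notin> labels x" "a \<notin> labels y" "a \<notin> labels z"
proof -
  obtain ov s where "filter (\<lambda>l. lab l = a) w = [GL a ov s, GL a (\<not> ov) s]"
    using assms by (auto simp: wf_def)
  from filter2[OF this] show ?thesis using that by blast
qed

lemma ind_absent: "d \<notin> labels w \<Longrightarrow> ind w d = 0"
proof -
  assume "d \<notin> labels w"
  then have h: "dropWhile (\<lambda>l. lab l \<noteq> d) w = []" by (auto simp: dropWhile_eq_Nil_conv labels_def)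
  show ?thesis unfolding ind_def h by simp
qed

definition pairok :: "nat \<Rightarrow> gcode \<Rightarrow> bool" where
  "pairok a L \<longleftrightarrow> (\<exists>ov s. L = [GL a ov s, GL a (\<not> ov) s])"

lemma pairok_rotate1: "pairok a (rotate1 L) = pairok a L"
proof
  assume "pairok a L"
  then obtain ov s where "L = [GL a ov s, GL a (\<not> ov) s]" by (auto simp: pairok_def)
  then show "pairok a (rotate1 L)" unfolding pairok_def
    by (intro exI[of _ "\<not> ov"] exI[of _ s]) simp
next
  assume "pairok a (rotate1 L)"
  then obtain ov s where h: "rotate1 L = [GL a ov s, GL a (\<not> ov) s]" by (auto simp: pairok_def)
  then obtain x xs where L: "L = x # xs" by (cases L) auto
  with h have "xs @ [x] = [GL a ov s] @ [GL a (\<not> ov) s]" by simp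
  then have "xs = [GL a ov s]" "x = GL a (\<not> ov) s" by (simp_all only: append1_eq_conv)
  then show "pairok a L" unfolding pairok_def L
    by (intro exI[of _ "\<not> ov"] exI[of _ s]) simp
qed

lemma wf_pairok: "wf w \<longleftrightarrow> (\<forall>a\<in>labels w. pairok a (filter (\<lambda>l. lab l = a) w))"
  by (simp add: wf_def pairok_def)

lemma filter_rotate1: "filter P (rotate1 w) = (if w \<noteq> [] \<and> P (hd w) then rotate1 (filter P w) else filter P w)"
  by (cases w) auto

lemma labels_rotate1[simp]: "labels (rotate1 w) = labels w"
  by (simp add: labels_def)

lemma wf_rotate1: "wf (rotate1 w) = wf w"
proof -
  have "pairok a (filter (\<lambda>l. lab l = a) (rotate1 w)) = pairok a (filter (\<lambda>l. lab l = a) w)" for a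
    by (cases "w \<noteq> [] \<and> lab (hd w) = a") (simp_all add: filter_rotate1 pairok_rotate1 del: rotate1.simps)
  then show ?thesis unfolding wf_pairok labels_rotate1 by simp
qed

lemma ind_rotate:
  assumes "wf (e # w)"
  shows "ind (w @ [e]) d = ind (e # w) d"
proof -
  consider "d = lab e" | "d \<noteq> lab e" "d \<in> labels w" | "d \<notin> labels (e # w)" by auto
  then show ?thesis
  proof cases
    case 1
    then obtain ov s where f: "filter (\<lambda>l. lab l = d) (e # w) = [GL d ov s, GL d (\<not> ov) s]"
      using assms by (auto simp: wf_def)
    then have e: "e = GL d ov s" and "filter (\<lambda>l. lab l = d) w = [GL d (\<not> ov) s]"
      using 1 by auto
    then obtain y z where w: "w = y @ GL d (\<not> ov) s # z" "d \<notin> labels y" "d \<notin> labels z"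
      using filter1 by blast
    have "sumv (e # w) = 0" using wf_sumv assms by blast
    then have "sumv z = - sumv y" using w e by (simp add: val_def split: if_splits)
    moreover have "ind (e # w) d = (if ov then 1 else -1) * sumv y"
      using ind_decomp[of d "[]" y "GL d ov s" "GL d (\<not> ov) s" z] w e by simp
    moreover have "ind (w @ [e]) d = (if ov then -1 else 1) * sumv z"
      using ind_decomp[of d y z "GL d (\<not> ov) s" e "[]"] w e by simp
    ultimately show ?thesis by simp
  next
    case 2
    then obtain ov s where f: "filter (\<lambda>l. lab l = d) (e # w) = [GL d ov s, GL d (\<not> ov) s]"
      using assms by (auto simp: wf_def)
    then have "filter (\<lambda>l. lab l = d) w = [GL d ov s, GL d (\<not> ov) s]" using 2 by auto
    then obtain x y z where w: "w = x @ GL d ov s # y @ GL d (\<not> ov) s # z"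
       "d \<notin> labels x" "d \<notin> labels y" "d \<notin> labels z"
      using filter2 by blast
    show ?thesis
      using ind_decomp[of d "e # x" y "GL d ov s" "GL d (\<not> ov) s" z]
        ind_decomp[of d "x" y "GL d ov s" "GL d (\<not> ov) s" "z @ [e]"] w 2 by simp
  next
    case 3 then show ?thesis by (simp add: ind_absent)
  qed
qed

lemma NN_rotate:
  assumes "wf w" shows "NN (rotate1 w) = NN w"
proof (cases w)
  case Nil then show ?thesis by simp
next
  case (Cons e w')
  have "Nf (w' @ [e]) = Nf (e # w')"
    using ind_rotate[of e w'] assms Cons by (auto simp: Nf_def fun_eq_iff)
  then show ?thesis using Cons by (simp add: NN_def add.commute)
qed


lemma val_pair: "val (GL a ov s) + val (GL a (\<not> ov) s) = 0"
  by (simp add: val_def)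

lemma sum_Nf_cong: "(\<And>l. l \<in> set u \<Longrightarrow> ind w (lab l) = ind w' (lab l)) \<Longrightarrow>
  sum_list (map (Nf w) u) = sum_list (map (Nf w') u)"
  by (rule arg_cong[where f=sum_list], rule map_cong) (auto simp: Nf_def)

lemma not_in_labels: "a \<notin> labels x \<longleftrightarrow> (\<forall>l\<in>set x. lab l \<noteq> a)"
  by (auto simp: labels_def)

lemma filter_absent: "a \<notin> labels x \<Longrightarrow> filter (\<lambda>l. lab l = a) x = []"
  by (auto simp: labels_def filter_empty_conv)

lemma lab_notin: "l \<in> set x \<Longrightarrow> a \<notin> labels x \<Longrightarrow> lab l \<noteq> a"
  by (auto simp: labels_def)

lemma r1_facts:
  assumes w: "w = x @ [GL a ov s, GL a (\<not> ov) s] @ y" and w': "w' = x @ y" and a: "a \<notin> labels w'"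
  shows "wf w = wf w'" "NN w = NN w'"
proof -
  have lw: "labels w = insert a (labels w')" using w w' by auto
  have fb: "filter (\<lambda>l. lab l = b) w = filter (\<lambda>l. lab l = b) w'" if "b \<noteq> a" for b
    using w w' that by auto
  have fa: "filter (\<lambda>l. lab l = a) w = [GL a ov s, GL a (\<not> ov) s]"
    using w w' a by (auto simp: filter_absent)
  have "(\<forall>b\<in>labels w'. pairok b (filter (\<lambda>l. lab l = b) w)) = (\<forall>b\<in>labels w'. pairok b (filter (\<lambda>l. lab l = b) w'))"
  proof (rule ball_cong[OF HOL.refl])
    fix b assume "b \<in> labels w'"
    then have "b \<noteq> a" using a by auto
    then show "pairok b (filter (\<lambda>l. lab l = b) w) = pairok b (filter (\<lambda>l. lab l = b) w')"
      using fb by simp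
  qed
  then show "wf w = wf w'"
    unfolding wf_pairok lw using fa by (simp add: pairok_def)
  have ia: "ind w a = 0"
    using ind_decomp[of a x "[]" "GL a ov s" "GL a (\<not> ov) s" y] w w' a by simp
  have id: "ind w d = ind w' d" if "d \<noteq> a" for d
    using ind_repl[of "[GL a ov s, GL a (\<not> ov) s]" d "[]" x y] w w' that by (simp add: val_pair)
  have "NN w = sum_list (map (Nf w) x) + Nf w (GL a ov s) + Nf w (GL a (\<not> ov) s) + sum_list (map (Nf w) y)"
    using w by (simp add: NN_def)
  also have "\<dots> = sum_list (map (Nf w') x) + sum_list (map (Nf w') y)"
    using ia a w' id by (simp add: Nf_def, intro arg_cong2[where f="(+)"] sum_Nf_cong)
      (metis lab_notin)+
  finally show "NN w = NN w'" using w' by (simp add: NN_def)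
qed

lemma r2_ind:
  assumes "a \<noteq> b" "sa \<noteq> sb" "P = [GL a True sa, GL b True sb]"
      "Q = [GL a False sa, GL b False sb] \<or> Q = [GL b False sb, GL a False sa]"
      "w = x @ P @ y @ Q @ z \<or> w = x @ Q @ y @ P @ z"
      "a \<notin> labels (x @ y @ z)" "b \<notin> labels (x @ y @ z)"
  shows "ind w a = ind w b"
  using assms unfolding not_in_labels
  by (auto simp: ind_def dropWhile_append takeWhile_append val_def)

lemma r2_facts:
  assumes ab: "a \<noteq> b" "sa \<noteq> sb" and P: "P = [GL a True sa, GL b True sb]"
      and Q: "Q = [GL a False sa, GL b False sb] \<or> Q = [GL b False sb, GL a False sa]"
      and w: "w = x @ P @ y @ Q @ z \<or> w = x @ Q @ y @ P @ z"
      and w': "w' = x @ y @ z" and a: "a \<notin> labels w'" and b: "b \<notin> labels w'"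
  shows "wf w = wf w'" "NN w = NN w'"
proof -
  have lw: "labels w = insert a (insert b (labels w'))" using w w' P Q by auto
  have fc: "filter (\<lambda>l. lab l = c) w = filter (\<lambda>l. lab l = c) w'" if "c \<noteq> a" "c \<noteq> b" for c
    using w w' that P Q by auto
  have xyz: "filter (\<lambda>l. lab l = c) x = []" "filter (\<lambda>l. lab l = c) y = []" "filter (\<lambda>l. lab l = c) z = []"
    if "c = a \<or> c = b" for c
    using a b w' that by (auto simp: filter_absent)
  have pa: "pairok a (filter (\<lambda>l. lab l = a) w)" "pairok b (filter (\<lambda>l. lab l = b) w)"
    using w P Q ab xyz[of a] xyz[of b] unfolding pairok_def by auto
  have "(\<forall>c\<in>labels w'. pairok c (filter (\<lambda>l. lab l = c) w)) = (\<forall>c\<in>labels w'. pairok c (filter (\<lambda>l. lab l = c) w'))"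
  proof (rule ball_cong[OF HOL.refl])
    fix c assume "c \<in> labels w'"
    then have "c \<noteq> a" "c \<noteq> b" using a b by auto
    then show "pairok c (filter (\<lambda>l. lab l = c) w) = pairok c (filter (\<lambda>l. lab l = c) w')"
      using fc by simp
  qed
  then show "wf w = wf w'"
    unfolding wf_pairok lw using pa by simp
  have sP: "sumv P = 0" and sQ: "sumv Q = 0" using P Q ab by (auto simp: val_def)
  have nP: "\<forall>l\<in>set P. lab l \<noteq> d" "\<forall>l\<in>set Q. lab l \<noteq> d" if "d \<noteq> a" "d \<noteq> b" for d
    using P Q that by auto
  have id: "ind w d = ind w' d" if "d \<noteq> a" "d \<noteq> b" for d
  proof -
    have e1: "ind (u @ P @ v) d = ind (u @ v) d" "ind (u @ Q @ v) d = ind (u @ v) d" for u v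
      using ind_repl[of P d "[]" u v] ind_repl[of Q d "[]" u v] nP[OF that] sP sQ by simp_all
    show ?thesis using w w' e1[of x "y @ Q @ z"] e1[of "x @ y" z] e1[of x "y @ P @ z"]
      by auto
  qed
  have iab: "ind w a = ind w b"
    using r2_ind[OF ab P Q w] a b w' by simp
  have sNP: "sum_list (map (Nf w) P) = 0" "sum_list (map (Nf w) Q) = 0"
    using P Q iab ab by (auto simp: Nf_def sg_def)
  have cx: "sum_list (map (Nf w) u) = sum_list (map (Nf w') u)" if "labels u \<subseteq> labels w'" for u
    using a b that by (intro sum_Nf_cong id) (auto simp: labels_def)
  show "NN w = NN w'"
  proof -
    have "labels x \<subseteq> labels w'" "labels y \<subseteq> labels w'" "labels z \<subseteq> labels w'" using w' by auto
    then show ?thesis using w w' sNP cx by (auto simp: NN_def)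
  qed
qed


lemma two_seg_rev:
  assumes S: "S = (if f1 then [e1, o1] else [o1, e1])" and S': "S' = (if f2 then [e2, o2] else [o2, e2])"
    and e: "lab e1 = d" "lab e2 = d" and o: "lab o1 \<noteq> d" "lab o2 \<noteq> d"
    and n: "\<forall>l\<in>set X1. lab l \<noteq> d" "\<forall>l\<in>set X2. lab l \<noteq> d"
    and cond: "(if f1 then val o1 else - val o1) = (if f2 then val o2 else - val o2)"
  shows "ind (X1 @ S @ X2 @ S' @ X3) d = ind (X1 @ rev S @ X2 @ rev S' @ X3) d"
  using assms by (cases f1; cases f2) (auto simp: ind_def dropWhile_append takeWhile_append)

lemma chord_gen:
  assumes SA: "SA = (if fa then [ea, oa] else [oa, ea])" and SB: "SB = (if fb then [eb, ob] else [ob, eb])"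
    and e: "lab ea = d" "lab eb = d" and o: "lab oa \<noteq> d" "lab ob \<noteq> d"
    and R: "\<forall>l\<in>set R. lab l \<noteq> d"
    and n: "\<forall>l\<in>set x. lab l \<noteq> d" "\<forall>l\<in>set y. lab l \<noteq> d" "\<forall>l\<in>set z. lab l \<noteq> d"
    and cond: "(if fa then val oa else - val oa) = (if fb then val ob else - val ob)"
    and perm: "(A, B, C) \<in> {(SA, SB, R), (SA, R, SB), (SB, SA, R), (SB, R, SA), (R, SA, SB), (R, SB, SA)}"
  shows "ind (x @ A @ y @ B @ z @ C @ v) d = ind (x @ rev A @ y @ rev B @ z @ rev C @ v) d"
proof -
  have rr: "ind (u @ rev R @ u') d = ind (u @ R @ u') d" for u u'
    using ind_repl[of "rev R" d R u u'] R by simp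
  have ts: "ind (X1 @ SA @ X2 @ SB @ X3) d = ind (X1 @ rev SA @ X2 @ rev SB @ X3) d"
    if "\<forall>l\<in>set X1. lab l \<noteq> d" "\<forall>l\<in>set X2. lab l \<noteq> d" for X1 X2 X3
    by (rule two_seg_rev[OF SA SB e o that cond])
  have ts': "ind (X1 @ SB @ X2 @ SA @ X3) d = ind (X1 @ rev SB @ X2 @ rev SA @ X3) d"
    if "\<forall>l\<in>set X1. lab l \<noteq> d" "\<forall>l\<in>set X2. lab l \<noteq> d" for X1 X2 X3
    by (rule two_seg_rev[OF SB SA e(2,1) o(2,1) that cond[symmetric]])
  from perm consider "A = SA" "B = SB" "C = R" | "A = SA" "B = R" "C = SB" | "A = SB" "B = SA" "C = R"
    | "A = SB" "B = R" "C = SA" | "A = R" "B = SA" "C = SB" | "A = R" "B = SB" "C = SA" by auto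
  then show ?thesis
  proof cases
    case 1
    then show ?thesis using ts[of x y "z @ R @ v"] rr[of "x @ rev SA @ y @ rev SB @ z" v] n by simp
  next
    case 2
    then show ?thesis using ts[of x "y @ R @ z" v] rr[of "x @ rev SA @ y" "z @ rev SB @ v"] n R by (simp add: ball_Un)
  next
    case 3
    then show ?thesis using ts'[of x y "z @ R @ v"] rr[of "x @ rev SB @ y @ rev SA @ z" v] n by simp
  next
    case 4
    then show ?thesis using ts'[of x "y @ R @ z" v] rr[of "x @ rev SB @ y" "z @ rev SA @ v"] n R by (simp add: ball_Un)
  next
    case 5
    then show ?thesis using ts[of "x @ R @ y" z v] rr[of x "y @ rev SA @ z @ rev SB @ v"] n R by (simp add: ball_Un)
  next
    case 6
    then show ?thesis using ts'[of "x @ R @ y" z v] rr[of x "y @ rev SB @ z @ rev SA @ v"] n R by (simp add: ball_Un)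
  qed
qed

lemma perm3:
  assumes "X \<noteq> Y" "Y \<noteq> Z" "X \<noteq> Z" "{A, B, C} = {X, Y, Z}"
  shows "(A, B, C) \<in> {(X, Y, Z), (X, Z, Y), (Y, X, Z), (Y, Z, X), (Z, X, Y), (Z, Y, X)}"
proof -
  have h: "A = X \<or> A = Y \<or> A = Z" "B = X \<or> B = Y \<or> B = Z" "C = X \<or> C = Y \<or> C = Z"
    using assms(4) by blast+
  have g: "X = A \<or> X = B \<or> X = C" "Y = A \<or> Y = B \<or> Y = C" "Z = A \<or> Z = B \<or> Z = C"
    using assms(4) by blast+
  show ?thesis using h g assms(1-3)
    apply -
    apply (elim disjE[of "A = X"] disjE[of "A = Y"] disjE[of "B = X"] disjE[of "B = Y"] disjE[of "C = X"] disjE[of "C = Y"])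
    apply (simp_all)
    done
qed

lemma filter_rev_small: "length (filter P X) \<le> 1 \<Longrightarrow> filter P (rev X) = filter P X"
proof -
  assume "length (filter P X) \<le> 1"
  then have "rev (filter P X) = filter P X" by (cases "filter P X") auto
  then show ?thesis by (simp add: rev_filter)
qed

lemma r3_facts:
  assumes dist: "distinct [a, b, c]" and s1: "(t = m) = (sb = sc)" and s2: "(t = bt) = (sa = sc)"
    and T: "T = (if t then [GL a True sa, GL b True sb] else [GL b True sb, GL a True sa])"
    and M: "M = (if m then [GL a False sa, GL c True sc] else [GL c True sc, GL a False sa])"
    and Bt: "Bt = (if bt then [GL b False sb, GL c False sc] else [GL c False sc, GL b False sb])"
    and ABC: "{A, B, C} = {T, M, Bt}"
    and w: "w = x @ A @ y @ B @ z @ C @ v"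
    and w': "w' = x @ rev A @ y @ rev B @ z @ rev C @ v"
  shows "wf w = wf w'" "wf w \<Longrightarrow> NN w = NN w'"
proof -
  have dTM: "T \<noteq> M" "M \<noteq> Bt" "T \<noteq> Bt"
  proof -
    have "GL a False sa \<in> set M" "GL a False sa \<notin> set T" "GL c True sc \<in> set M" "GL c True sc \<notin> set Bt"
      "GL b False sb \<in> set Bt" "GL b False sb \<notin> set T" using T M Bt by auto
    then show "T \<noteq> M" "M \<noteq> Bt" "T \<noteq> Bt" by metis+
  qed
  have perm: "(A, B, C) \<in> {(T, M, Bt), (T, Bt, M), (M, T, Bt), (M, Bt, T), (Bt, T, M), (Bt, M, T)}"
    using perm3[OF dTM(1,2,3) ABC] .
  have small: "filter (\<lambda>l. lab l = e) (rev X) = filter (\<lambda>l. lab l = e) X" if "X \<in> {T, M, Bt}" for X e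
    using that T M Bt dist by (intro filter_rev_small) auto
  have ABCin: "A \<in> {T, M, Bt}" "B \<in> {T, M, Bt}" "C \<in> {T, M, Bt}" using ABC by blast+
  have fe: "filter (\<lambda>l. lab l = e) w' = filter (\<lambda>l. lab l = e) w" for e
    using w w' small[OF ABCin(1)] small[OF ABCin(2)] small[OF ABCin(3)] by simp
  have lw: "labels w' = labels w" using w w' by simp
  show "wf w = wf w'" unfolding wf_def lw fe ..
  assume wfw: "wf w"
  have labABC: "labels X \<subseteq> {a, b, c}" if "X \<in> {T, M, Bt}" for X
    using that T M Bt by (cases t; cases m; cases bt) auto
  have nol: "filter (\<lambda>l. lab l = e) x = [] \<and> filter (\<lambda>l. lab l = e) y = [] \<and> filter (\<lambda>l. lab l = e) z = []"
    if e: "e \<in> {a, b, c}" for e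
  proof -
    have "T \<in> {A, B, C}" "M \<in> {A, B, C}" using ABC by blast+
    then have "labels T \<union> labels M \<subseteq> labels w" using w by auto
    moreover have "labels T = {a, b}" "labels M = {a, c}" using T M by (cases t; cases m; auto)+
    ultimately have "e \<in> labels w" using e by auto
    then obtain ov s where "filter (\<lambda>l. lab l = e) w = [GL e ov s, GL e (\<not> ov) s]"
      using wfw by (auto simp: wf_def)
    then have "length (filter (\<lambda>l. lab l = e) w) = 2" by simp
    moreover have "length (filter (\<lambda>l. lab l = e) A) + length (filter (\<lambda>l. lab l = e) B) + length (filter (\<lambda>l. lab l = e) C)
       = length (filter (\<lambda>l. lab l = e) T) + length (filter (\<lambda>l. lab l = e) M) + length (filter (\<lambda>l. lab l = e) Bt)"
      using perm by auto
    moreover have "length (filter P (if t' then [x', y'] else [y', x'])) = length (filter P [x', y'])" for P t' x' y'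
      by simp
    then have "length (filter (\<lambda>l. lab l = e) T) + length (filter (\<lambda>l. lab l = e) M) + length (filter (\<lambda>l. lab l = e) Bt) = 2"
      unfolding T M Bt using e dist by auto
    ultimately have "length (filter (\<lambda>l. lab l = e) x) + length (filter (\<lambda>l. lab l = e) y) + length (filter (\<lambda>l. lab l = e) z) = 0"
      using w by (simp only: filter_append length_append)
    then show ?thesis by (simp only: add_is_0 length_0_conv)
  qed
  have nx: "\<forall>l\<in>set x. lab l \<noteq> e" "\<forall>l\<in>set y. lab l \<noteq> e" "\<forall>l\<in>set z. lab l \<noteq> e"
    if "e \<in> {a, b, c}" for e
    using nol[OF that] by (auto simp: filter_empty_conv)
  have ieq: "ind w d = ind w' d" for d
  proof -
    consider "d = a" | "d = b" | "d = c" | "d \<notin> {a, b, c}" by auto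
    then show ?thesis
    proof cases
      case 1
      show ?thesis unfolding w w' 1
        apply (rule chord_gen[where SA=T and fa=t and ea="GL a True sa" and oa="GL b True sb"
              and SB=M and fb=m and eb="GL a False sa" and ob="GL c True sc" and R=Bt])
                 apply (fact T)
                apply (fact M)
               apply (simp add: 1)
              apply (simp add: 1)
        using dist apply simp
        using dist apply simp
        using dist Bt apply simp
        using nx[of a] apply simp
        using nx[of a] apply simp
        using nx[of a] apply simp
        using s1 apply (simp add: val_def)
        using perm apply blast
        using perm apply blast
        done
    next
      case 2
      have T': "T = (if \<not> t then [GL b True sb, GL a True sa] else [GL a True sa, GL b True sb])"
        using T by simp
      show ?thesis unfolding w w' 2
        apply (rule chord_gen[where SA=T and fa="\<not> t" and ea="GL b True sb" and oa="GL a True sa"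
              and SB=Bt and fb=bt and eb="GL b False sb" and ob="GL c False sc" and R=M])
                 apply (fact T')
                apply (fact Bt)
               apply (simp add: 2)
              apply (simp add: 2)
        using dist apply simp
        using dist apply simp
        using dist M apply simp
        using nx[of b] apply simp
        using nx[of b] apply simp
        using nx[of b] apply simp
        using s2 apply (simp add: val_def)
        using perm apply blast
        using perm apply blast
        done
    next
      case 3
      have M': "M = (if \<not> m then [GL c True sc, GL a False sa] else [GL a False sa, GL c True sc])"
        using M by simp
      have Bt': "Bt = (if \<not> bt then [GL c False sc, GL b False sb] else [GL b False sb, GL c False sc])"
        using Bt by simp
      show ?thesis unfolding w w' 3
        apply (rule chord_gen[where SA=M and fa="\<not> m" and ea="GL c True sc" and oa="GL a False sa"
              and SB=Bt and fb="\<not> bt" and eb="GL c False sc" and ob="GL b False sb" and R=T])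
                 apply (fact M')
                apply (fact Bt')
               apply (simp add: 3)
              apply (simp add: 3)
        using dist apply simp
        using dist apply simp
        using dist T apply simp
        using nx[of c] apply simp
        using nx[of c] apply simp
        using nx[of c] apply simp
        using s1 s2 apply (simp add: val_def)
        using perm apply blast
        using perm apply blast
        done
    next
      case 4
      have nd: "\<forall>l\<in>set X. lab l \<noteq> d" if "X \<in> {T, M, Bt}" for X
        using labABC[OF that] 4 by (auto simp: labels_def)
      have "ind (x @ A @ y @ B @ z @ C @ v) d = ind (x @ rev A @ y @ B @ z @ C @ v) d"
        using ind_repl[of A d "rev A" x "y @ B @ z @ C @ v"] nd ABCin by simp
      also have "\<dots> = ind ((x @ rev A @ y) @ rev B @ z @ C @ v) d"
        using ind_repl[of B d "rev B" "x @ rev A @ y" "z @ C @ v"] nd ABCin by simp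
      also have "\<dots> = ind ((x @ rev A @ y @ rev B @ z) @ rev C @ v) d"
        using ind_repl[of C d "rev C" "x @ rev A @ y @ rev B @ z" v] nd ABCin by simp
      finally show ?thesis using w w' by simp
    qed
  qed
  have "Nf w' = Nf w" using ieq by (auto simp: Nf_def fun_eq_iff)
  then show "NN w = NN w'" using w w' by (simp add: NN_def rev_map[symmetric] sum_list_rev)
qed


definition rl :: "(nat \<Rightarrow> nat) \<Rightarrow> gletter \<Rightarrow> gletter" where
  "rl f l = GL (f (lab l)) (over l) (positive l)"

lemma rl_simps[simp]: "lab (rl f l) = f (lab l)" "over (rl f l) = over l" "positive (rl f l) = positive l"
  "val (rl f l) = val l" "sg (rl f l) = sg l"
  by (auto simp: rl_def val_def sg_def)

lemma sumv_map_rl[simp]: "sumv (map (rl f) X) = sumv X"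
  by (induction X) auto

lemma filter_rl: "inj f \<Longrightarrow> filter (\<lambda>l. lab l = f a) (map (rl f) w) = map (rl f) (filter (\<lambda>l. lab l = a) w)"
  by (induction w) (auto simp: inj_eq)

lemma labels_rl: "labels (map (rl f) w) = f ` labels w"
  by (simp add: labels_def image_image)

lemma ind_rl: assumes "inj f" shows "ind (map (rl f) w) (f d) = ind w d"
proof -
  have P: "((\<lambda>l. lab l \<noteq> f d) \<circ> rl f) = (\<lambda>l. lab l \<noteq> d)" using assms by (auto simp: inj_eq fun_eq_iff)
  have 1: "ind (map (rl f) w) (f d) = (case map (rl f) (dropWhile (\<lambda>l. lab l \<noteq> d) w) of [] \<Rightarrow> 0
     | e # r \<Rightarrow> (if over e then 1 else -1) * sumv (takeWhile (\<lambda>l. lab l \<noteq> f d) r))"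
    by (simp add: ind_def dropWhile_map P)
  have 2: "(case map (rl f) D of [] \<Rightarrow> 0
     | e # r \<Rightarrow> (if over e then 1 else -1) * sumv (takeWhile (\<lambda>l. lab l \<noteq> f d) r))
     = (case D of [] \<Rightarrow> 0
     | e # r \<Rightarrow> (if over e then 1 else -1) * sumv (takeWhile (\<lambda>l. lab l \<noteq> d) r))" for D
    by (cases D) (simp_all add: takeWhile_map P)
  have 3: "ind w d = (case dropWhile (\<lambda>l. lab l \<noteq> d) w of [] \<Rightarrow> 0
     | e # r \<Rightarrow> (if over e then 1 else -1) * sumv (takeWhile (\<lambda>l. lab l \<noteq> d) r))"
    by (simp add: ind_def)
  show ?thesis by (simp only: 1 2 3)
qed

lemma relabel_facts:
  assumes f: "inj f" and w': "w' = map (\<lambda>l. GL (f (lab l)) (over l) (positive l)) w"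
  shows "wf w = wf w'" "NN w' = NN w"
proof -
  have w'': "w' = map (rl f) w" using w' by (simp add: rl_def[abs_def])
  show "wf w = wf w'"
  proof
    assume "wf w"
    show "wf w'" unfolding wf_def
    proof
      fix b assume "b \<in> labels w'"
      then obtain a where a: "a \<in> labels w" "b = f a" using w'' labels_rl by auto
      then obtain ov s where "filter (\<lambda>l. lab l = a) w = [GL a ov s, GL a (\<not> ov) s]"
        using \<open>wf w\<close> by (auto simp: wf_def)
      then show "\<exists>ov s. filter (\<lambda>l. lab l = b) w' = [GL b ov s, GL b (\<not> ov) s]"
        using filter_rl[OF f, of a w] a w'' by (auto simp: rl_def)
    qed
  next
    assume "wf w'"
    show "wf w" unfolding wf_def
    proof
      fix a assume "a \<in> labels w"
      then have "f a \<in> labels w'" using w'' labels_rl by auto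
      then obtain ov s where "filter (\<lambda>l. lab l = f a) w' = [GL (f a) ov s, GL (f a) (\<not> ov) s]"
        using \<open>wf w'\<close> unfolding wf_def by blast
      then have h: "map (rl f) (filter (\<lambda>l. lab l = a) w) = [GL (f a) ov s, GL (f a) (\<not> ov) s]"
        using filter_rl[OF f, of a w] w'' by simp
      then obtain l1 l2 where l: "filter (\<lambda>l. lab l = a) w = [l1, l2]" by (auto simp: map_eq_Cons_conv)
      have "set [l1, l2] \<subseteq> {x. lab x = a}" unfolding l[symmetric] by auto
      then have "lab l1 = a" "lab l2 = a" by auto
      then have "l1 = GL a ov s" "l2 = GL a (\<not> ov) s" using h l by (auto simp: rl_def gletter.expand)
      then show "\<exists>ov s. filter (\<lambda>l. lab l = a) w = [GL a ov s, GL a (\<not> ov) s]" using l by blast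
    qed
  qed
  have "Nf w' (rl f l) = Nf w l" for l
    using ind_rl[OF f] w'' by (simp add: Nf_def)
  then show "NN w' = NN w" using w'' by (simp add: NN_def comp_def)
qed

definition ch :: "nat \<Rightarrow> gletter \<Rightarrow> gletter" where
  "ch a l = (if lab l = a then GL a (\<not> over l) (\<not> positive l) else l)"

lemma ch_simps[simp]: "lab (ch a l) = lab l" "val (ch a l) = val l"
  by (auto simp: ch_def val_def)

lemma sumv_map_ch[simp]: "sumv (map (ch a) X) = sumv X"
  by (induction X) auto

lemma ind_ch: assumes "d \<noteq> a" shows "ind (map (ch a) w) d = ind w d"
proof -
  have P: "((\<lambda>l. lab l \<noteq> d) \<circ> ch a) = (\<lambda>l. lab l \<noteq> d)" by (auto simp: fun_eq_iff)
  have 1: "ind (map (ch a) w) d = (case map (ch a) (dropWhile (\<lambda>l. lab l \<noteq> d) w) of [] \<Rightarrow> 0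
     | e # r \<Rightarrow> (if over e then 1 else -1) * sumv (takeWhile (\<lambda>l. lab l \<noteq> d) r))"
    by (simp add: ind_def dropWhile_map P)
  have 2: "(case map (ch a) D of [] \<Rightarrow> 0
     | e # r \<Rightarrow> (if over e then 1 else -1) * sumv (takeWhile (\<lambda>l. lab l \<noteq> d) r))
     = (case D of [] \<Rightarrow> 0
     | e # r \<Rightarrow> (if over e then 1 else -1) * sumv (takeWhile (\<lambda>l. lab l \<noteq> d) r))"
    if "D = dropWhile (\<lambda>l. lab l \<noteq> d) w" for D
  proof (cases D)
    case (Cons e r)
    then have "lab e = d" using that hd_dropWhile[of "\<lambda>l. lab l \<noteq> d" w] by auto
    then have "ch a e = e" using assms by (simp add: ch_def)
    then show ?thesis using Cons by (simp add: takeWhile_map P)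
  qed simp
  have 3: "ind w d = (case dropWhile (\<lambda>l. lab l \<noteq> d) w of [] \<Rightarrow> 0
     | e # r \<Rightarrow> (if over e then 1 else -1) * sumv (takeWhile (\<lambda>l. lab l \<noteq> d) r))"
    by (simp add: ind_def)
  show ?thesis by (simp only: 1 2[OF HOL.refl] 3)
qed

lemma sum_list_filter_split:
  fixes g :: "gletter \<Rightarrow> int"
  shows "sum_list (map g w) = sum_list (map g (filter P w)) + sum_list (map g (filter (\<lambda>l. \<not> P l) w))"
  by (induction w) auto

lemma Nf_bound: "\<bar>Nf X l\<bar> \<le> 1" "\<not> over l \<Longrightarrow> Nf X l = 0"
  by (auto simp: Nf_def sg_def)

lemma pair_bound: "over l1 \<noteq> over l2 \<Longrightarrow> \<bar>Nf X l1 + Nf X l2\<bar> \<le> 1"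
  using Nf_bound[where X=X and l=l1] Nf_bound[where X=X and l=l2] by (cases "over l1") auto

lemma xchange_facts:
  assumes wf: "wf w" and x: "xchange w w'"
  shows "wf w'" "\<bar>NN w - NN w'\<bar> \<le> 2"
proof -
  obtain a where a: "a \<in> labels w" and w': "w' = map (ch a) w"
    using x by (auto simp: xchange_def ch_def[abs_def])
  obtain ov s where fa: "filter (\<lambda>l. lab l = a) w = [GL a ov s, GL a (\<not> ov) s]"
    using wf a by (auto simp: wf_def)
  have fm: "filter (\<lambda>l. lab l = b) w' = map (ch a) (filter (\<lambda>l. lab l = b) w)" for b
    using w' by (induction w arbitrary: w') auto
  have fb: "map (ch a) (filter (\<lambda>l. lab l = b) w) = filter (\<lambda>l. lab l = b) w" if "b \<noteq> a" for b
    using that by (induction w) (auto simp: ch_def)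
  have lw: "labels w' = labels w" using w' by (simp add: labels_def image_image)
  show "wf w'" unfolding wf_def lw
  proof
    fix b assume b: "b \<in> labels w"
    show "\<exists>ov s. filter (\<lambda>l. lab l = b) w' = [GL b ov s, GL b (\<not> ov) s]"
    proof (cases "b = a")
      case True
      then show ?thesis using fm[of a] fa by (intro exI[of _ "\<not> ov"] exI[of _ "\<not> s"]) (simp add: ch_def)
    next
      case False
      then show ?thesis using fm[of b] fb[of b] wf b by (simp add: wf_def)
    qed
  qed
  have ne: "Nf w' (ch a l) = Nf w l" if "lab l \<noteq> a" for l
    using that ind_ch[of "lab l" a w] w' by (simp add: Nf_def ch_def)
  have nota: "filter (\<lambda>l. lab l \<noteq> a) w = filter (\<lambda>l. \<not> (lab l = a)) w" by simp
  have "sum_list (map (Nf w' \<circ> ch a) (filter (\<lambda>l. \<not> lab l = a) w)) = sum_list (map (Nf w) (filter (\<lambda>l. \<not> lab l = a) w))"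
    by (rule arg_cong[where f=sum_list], rule map_cong) (auto simp: ne)
  moreover have "NN w' = sum_list (map (Nf w' \<circ> ch a) (filter (\<lambda>l. lab l = a) w)) + sum_list (map (Nf w' \<circ> ch a) (filter (\<lambda>l. \<not> lab l = a) w))"
    unfolding NN_def using w' sum_list_filter_split[of "Nf w' \<circ> ch a" w "\<lambda>l. lab l = a"] by simp
  moreover have "NN w = sum_list (map (Nf w) (filter (\<lambda>l. lab l = a) w)) + sum_list (map (Nf w) (filter (\<lambda>l. \<not> lab l = a) w))"
    unfolding NN_def using sum_list_filter_split[of "Nf w" w "\<lambda>l. lab l = a"] by simp
  moreover have "\<bar>sum_list (map (Nf w' \<circ> ch a) (filter (\<lambda>l. lab l = a) w))\<bar> \<le> 1"
    using fa pair_bound[of "GL a (\<not> ov) (\<not> s)" "GL a ov (\<not> s)" w'] by (simp add: ch_def)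
  moreover have "\<bar>sum_list (map (Nf w) (filter (\<lambda>l. lab l = a) w))\<bar> \<le> 1"
    using fa pair_bound[of "GL a ov s" "GL a (\<not> ov) s" w] by simp
  ultimately show "\<bar>NN w - NN w'\<bar> \<le> 2" by linarith
qed


lemma gmove_facts:
  assumes "gmove w w'"
  shows "wf w = wf w'" "wf w \<Longrightarrow> NN w = NN w'"
proof -
  have "(wf w = wf w') \<and> (wf w \<longrightarrow> NN w = NN w')"
    using assms unfolding gmove_def
    apply (elim disjE)
    subgoal using wf_rotate1 NN_rotate by simp
    subgoal apply (elim exE conjE)
      subgoal premises h using relabel_facts[OF h] by simp
      done
    subgoal unfolding r1_del_def apply (elim exE conjE)
      subgoal premises h using r1_facts[OF h] by simp
      done
    subgoal unfolding r2_del_def apply (elim exE conjE)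
      subgoal premises h using r2_facts[OF h] by simp
      done
    subgoal unfolding r3_def apply (elim exE conjE)
      subgoal premises h using r3_facts[OF h(1,2,3) HOL.refl HOL.refl HOL.refl h(4,5,6)] by simp
      done
    done
  then show "wf w = wf w'" "wf w \<Longrightarrow> NN w = NN w'" by auto
qed

lemma reach_bound:
  assumes "reach w k w''" "wf w"
  shows "wf w'' \<and> \<bar>NN w - NN w''\<bar> \<le> 2 * int k"
  using assms
proof (induction rule: reach.induct)
  case (refl w) then show ?case by simp
next
  case (move w w' k w'')
  have "wf w'" "NN w = NN w'"
    using move.hyps(1) move.prems gmove_facts[of w w'] gmove_facts[of w' w] by auto
  then show ?case using move.IH by simp
next
  case (change w w' k w'')
  have "wf w'" "\<bar>NN w - NN w'\<bar> \<le> 2" using xchange_facts change by blast+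
  then show ?case using change.IH by auto
qed

lemma NN_Nil: "NN [] = 0" by (simp add: NN_def)

lemma vu_bound:
  assumes "wf D" "int M \<le> NN D"
  shows "enat M \<le> 2 * vu D"
proof -
  have k: "M \<le> 2 * k" if "reach D k []" for k
    using reach_bound[OF that assms(1)] assms(2) NN_Nil by simp
  define c where "c = (M + 1) div 2"
  have "enat c \<le> vu D" unfolding vu_def
  proof (rule INF_greatest)
    fix i assume "i \<in> {k. reach D k []}"
    then have "M \<le> 2 * i" using k by auto
    then show "enat c \<le> enat i" unfolding c_def by simp
  qed
  then have "2 * enat c \<le> 2 * vu D" by (simp add: mult_left_mono)
  moreover have "enat M \<le> 2 * enat c" unfolding c_def by (simp add: numeral_eq_enat)
  ultimately show ?thesis by (rule order_trans[rotated])
qed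


definition pos :: "nat \<Rightarrow> nat \<Rightarrow> nat" where
  "pos p T = (if T mod p = 0 then 1 else p - T mod p + 1)"

definition Lb :: "nat \<Rightarrow> nat \<Rightarrow> nat \<Rightarrow> nat \<Rightarrow> gcode" where
  "Lb n p i T = (if i < n then [] else if T mod p = 0
     then map (\<lambda>m. GL (i * (p - 1) + m - 1) True True) [1..<p]
     else [GL (i * (p - 1) + (p - T mod p) - 1) False True])"

lemma pass_append:
  "pass (u @ v) k P = (fst (pass u k P) @ fst (pass v (k + length u) (snd (pass u k P))),
                        snd (pass v (k + length u) (snd (pass u k P))))"
proof (induction u arbitrary: k P)
  case Nil then show ?case by simp
next
  case (Cons a u)
  then show ?case by (cases a) (simp_all add: Let_def)
qed

lemma pass_Cl:
  assumes "1 \<le> j"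
  shows "pass (map Cl [j..<p]) k P =
    (if P = j \<and> j < p then (map (\<lambda>m. GL (k + m - j) True True) [j..<p], p)
     else if j < P \<and> P \<le> p then ([GL (k + P - 1 - j) False True], P - 1) else ([], P))"
  using assms
proof (induction "p - j" arbitrary: j k P)
  case 0 then show ?case by simp
next
  case (Suc x)
  then have jp: "j < p" by simp
  have u: "[j..<p] = j # [Suc j..<p]" using jp by (simp add: upt_conv_Cons)
  have IH: "pass (map Cl [Suc j..<p]) k' P' =
    (if P' = Suc j \<and> Suc j < p then (map (\<lambda>m. GL (k' + m - Suc j) True True) [Suc j..<p], p)
     else if Suc j < P' \<and> P' \<le> p then ([GL (k' + P' - 1 - Suc j) False True], P' - 1) else ([], P'))" for k' P'
    using Suc by simp
  have m1: "map (\<lambda>m. GL (Suc k + m - Suc j) True True) [Suc j..<p] = map (\<lambda>m. GL (k + m - j) True True) [Suc j..<p]"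
    by (rule map_cong) auto
  consider "P = j" | "P = Suc j" | "P \<noteq> j" "P \<noteq> Suc j" by blast
  then show ?case
  proof cases
    case 1
    then show ?thesis unfolding u using jp Suc.prems
      by (cases "Suc j < p") (auto simp: IH m1 Let_def)
  next
    case 2
    then show ?thesis unfolding u using jp Suc.prems
      by (auto simp: IH Let_def)
  next
    case 3
    then show ?thesis unfolding u using jp Suc.prems
      by (auto simp: IH Let_def)
  qed
qed

lemma pass_Vi:
  assumes "1 \<le> j"
  shows "pass (map Vi [j..<p]) k P =
    ([], if P = j \<and> j < p then p else if j < P \<and> P \<le> p then P - 1 else P)"
  using assms
proof (induction "p - j" arbitrary: j k P)
  case 0 then show ?case by simp
next
  case (Suc x)
  then have jp: "j < p" by simp
  have u: "[j..<p] = j # [Suc j..<p]" using jp by (simp add: upt_conv_Cons)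
  have IH: "pass (map Vi [Suc j..<p]) k' P' =
    ([], if P' = Suc j \<and> Suc j < p then p else if Suc j < P' \<and> P' \<le> p then P' - 1 else P')" for k' P'
    using Suc by simp
  show ?case
    unfolding u using jp Suc.prems by (auto simp: IH)
qed

lemma pos_range: "2 \<le> p \<Longrightarrow> 1 \<le> pos p T \<and> pos p T \<le> p"
  by (auto simp: pos_def)

lemma pos_Suc: assumes "2 \<le> p" shows "pos p (Suc T) = (if pos p T = 1 then p else pos p T - 1)"
proof -
  have "T mod p < p" using assms by simp
  consider "T mod p = 0" | "T mod p > 0" "Suc (T mod p) < p" | "Suc (T mod p) = p"
    using \<open>T mod p < p\<close> by linarith
  then show ?thesis
  proof cases
    case 1
    then have "Suc T mod p = 1" using assms by (simp add: mod_Suc)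
    then show ?thesis using 1 assms by (simp add: pos_def)
  next
    case 2
    then have "Suc T mod p = Suc (T mod p)" by (simp add: mod_Suc)
    then show ?thesis using 2 assms by (simp add: pos_def)
  next
    case 3
    then have "Suc T mod p = 0" by (simp add: mod_Suc)
    then show ?thesis using 3 assms by (simp add: pos_def)
  qed
qed

definition blk :: "nat \<Rightarrow> nat \<Rightarrow> nat \<Rightarrow> bletter list" where
  "blk n p i = map (if i < n then Vi else Cl) [1..<p]"

lemma length_blk[simp]: "length (blk n p i) = p - 1"
  by (simp add: blk_def)

lemma pass_blk:
  assumes "2 \<le> p"
  shows "pass (blk n p i) (i * (p - 1)) (pos p T) = (Lb n p i T, pos p (Suc T))"
proof (cases "i < n")
  case True
  then show ?thesis using assms pass_Vi[of 1 p "i * (p - 1)" "pos p T"] pos_range[OF assms, of T]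
    by (auto simp: blk_def Lb_def pos_Suc[OF assms])
next
  case False
  have r: "pass (map Cl [1..<p]) (i * (p - 1)) (pos p T) = (Lb n p i T, pos p (Suc T))"
  proof (cases "T mod p = 0")
    case True
    then have "pos p T = 1" "pos p (Suc T) = p" using pos_Suc[OF assms, of T] by (auto simp: pos_def)
    then show ?thesis using True False assms pass_Cl[of 1 p "i * (p - 1)" "pos p T"]
      by (auto simp: Lb_def)
  next
    case F: False
    have "T mod p < p" using assms by simp
    then have "pos p T = p - T mod p + 1" "pos p (Suc T) = p - T mod p" using pos_Suc[OF assms, of T] F
      by (auto simp: pos_def)
    then show ?thesis using False F assms pass_Cl[of 1 p "i * (p - 1)" "pos p T"] \<open>T mod p < p\<close>
      by (auto simp: Lb_def)
  qed
  then show ?thesis using False by (simp add: blk_def)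
qed

lemma pass_blocks:
  assumes "2 \<le> p" "j \<le> q"
  shows "pass (concat (map (blk n p) [j..<q])) (j * (p - 1)) (pos p (B + j))
     = (concat (map (\<lambda>i. Lb n p i (B + i)) [j..<q]), pos p (B + q))"
  using assms(2)
proof (induction "q - j" arbitrary: j)
  case 0 then show ?case by simp
next
  case (Suc x)
  then have jq: "j < q" by simp
  have u: "[j..<q] = j # [Suc j..<q]" using jq by (simp add: upt_conv_Cons)
  have k: "j * (p - 1) + (p - 1) = Suc j * (p - 1)" by simp
  have IH: "pass (concat (map (blk n p) [Suc j..<q])) (j * (p - 1) + (p - 1)) (pos p (Suc (B + j)))
     = (concat (map (\<lambda>i. Lb n p i (B + i)) [Suc j..<q]), pos p (B + q))"
    using Suc.hyps(1)[of "Suc j"] Suc.hyps(2) jq unfolding k by simp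
  have "pass (blk n p j @ concat (map (blk n p) [Suc j..<q])) (j * (p - 1)) (pos p (B + j))
    = (Lb n p j (B + j) @ fst (pass (concat (map (blk n p) [Suc j..<q])) (j * (p - 1) + (p - 1)) (pos p (Suc (B + j)))),
       snd (pass (concat (map (blk n p) [Suc j..<q])) (j * (p - 1) + (p - 1)) (pos p (Suc (B + j)))))"
    by (simp only: pass_append length_blk pass_blk[OF assms(1)] fst_conv snd_conv)
  then show ?case unfolding u IH by simp
qed

definition LL :: "nat \<Rightarrow> nat \<Rightarrow> nat \<Rightarrow> nat \<Rightarrow> gcode" where
  "LL n p q T = Lb n p (T mod q) T"

lemma VT_braid_blk: "VT_braid n p q = concat (map (blk n p) [0..<q])"
  unfolding VT_braid_def blk_def[abs_def] by simp

lemma traverse_VT: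
  assumes "2 \<le> p" "1 \<le> q"
  shows "traverse (VT_braid n p q) r (pos p (R * q)) = concat (map (LL n p q) [R * q..<(R + r) * q])"
proof (induction r arbitrary: R)
  case 0 then show ?case by simp
next
  case (Suc r)
  have pb: "pass (VT_braid n p q) 0 (pos p (R * q)) = (concat (map (\<lambda>i. Lb n p i (R * q + i)) [0..<q]), pos p (R * q + q))"
    using pass_blocks[OF assms(1), of 0 q n "R * q"] by (simp add: VT_braid_blk)
  have m: "concat (map (LL n p q) [R * q..<R * q + q]) = concat (map (\<lambda>i. Lb n p i (R * q + i)) [0..<q])"
  proof -
    have "[a..<a + k] = map (\<lambda>i. a + i) [0..<k]" for a k by (induction k) auto
    then have "[R * q..<R * q + q] = map (\<lambda>i. R * q + i) [0..<q]" .
    then show ?thesis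
      apply (simp add: LL_def comp_def)
      apply (rule arg_cong[where f=concat])
      apply (rule map_cong)
       apply auto
      done
  qed
  have s: "[R * q..<(R + Suc r) * q] = [R * q..<R * q + q] @ [Suc R * q..<(Suc R + r) * q]"
    using upt_add_eq_append[of "R * q" "R * q + q" "q * r"] by (simp add: algebra_simps)
  show ?case using Suc[of "Suc R"] pb m s by (simp add: add.commute)
qed

lemma VT_eq:
  assumes "2 \<le> p" "1 \<le> q"
  shows "VT n p q = concat (map (LL n p q) [0..<p * q])"
  using traverse_VT[OF assms, of n p 0] by (simp add: VT_def closure_code_def pos_def mult.commute)


lemma crt_unique:
  fixes p q :: nat
  assumes "coprime p q" "T1 < p * q" "T2 < p * q" "T1 mod p = T2 mod p" "T1 mod q = T2 mod q"
  shows "T1 = T2"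
proof -
  have "p * q dvd (T2 - T1)" if "T1 \<le> T2" "T1 mod p = T2 mod p" "T1 mod q = T2 mod q" for T1 T2 :: nat
  proof -
    have "p dvd T2 - T1" "q dvd T2 - T1" using that mod_eq_dvd_iff_nat[of T1 T2 p] mod_eq_dvd_iff_nat[of T1 T2 q] by simp_all
    then show ?thesis using assms(1) by (simp add: divides_mult)
  qed
  moreover have "d = 0" if "p * q dvd d" "d < p * q" for d :: nat
    using that by (metis dvd_imp_le not_less neq0_conv)
  ultimately have "T1 \<le> T2 \<Longrightarrow> T2 - T1 = 0" "T2 \<le> T1 \<Longrightarrow> T1 - T2 = 0"
    using assms by (metis less_imp_diff_less)+
  then show ?thesis by linarith
qed

lemma crt_exists:
  fixes p q :: nat
  assumes "coprime p q" "0 < p" "0 < q" "a < p" "b < q"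
  shows "\<exists>T < p * q. T mod p = a \<and> T mod q = b"
proof -
  let ?f = "\<lambda>T. (T mod p, T mod q)"
  have inj: "inj_on ?f {..<p * q}"
    by (rule inj_onI) (use crt_unique[OF assms(1)] in auto)
  have sub: "?f ` {..<p * q} \<subseteq> {..<p} \<times> {..<q}" using assms by auto
  have "card (?f ` {..<p * q}) = card ({..<p} \<times> {..<q})"
    using card_image[OF inj] by (simp add: card_cartesian_product)
  then have "?f ` {..<p * q} = {..<p} \<times> {..<q}"
    by (intro card_subset_eq sub) auto
  then have "(a, b) \<in> ?f ` {..<p * q}" using assms by auto
  then show ?thesis by force
qed

lemma filter_eq_upt: "filter (\<lambda>m. m = x) [a..<b] = (if a \<le> x \<and> x < b then [x] else [])"
  by (induction b) auto

lemma divmod_unique: "j < (k::nat) \<Longrightarrow> (i * k + j) div k = i \<and> (i * k + j) mod k = j"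
  by simp

lemma filter_LL:
  assumes p2: "2 \<le> p"
  shows "filter (\<lambda>l. lab l = c) (LL n p q T) =
    (if T mod q = c div (p - 1) \<and> n \<le> c div (p - 1) then
       (if T mod p = 0 then [GL c True True] else if T mod p = p - 1 - c mod (p - 1) then [GL c False True] else [])
     else [])"
proof -
  define i where "i = T mod q"
  have cdec: "c = c div (p - 1) * (p - 1) + c mod (p - 1)" by (rule div_mult_mod_eq[symmetric])
  have cm: "c mod (p - 1) < p - 1" using p2 by simp
  show ?thesis
  proof (cases "i < n")
    case True then show ?thesis by (auto simp: LL_def Lb_def i_def)
  next
    case False
    show ?thesis
    proof (cases "T mod p = 0")
      case True
      have "filter (\<lambda>l. lab l = c) (map (\<lambda>m. GL (i * (p - 1) + m - 1) True True) [1..<p])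
         = map (\<lambda>m. GL (i * (p - 1) + m - 1) True True) (filter (\<lambda>m. i * (p - 1) + m - 1 = c) [1..<p])"
        by (simp add: filter_map comp_def)
      also have "filter (\<lambda>m. i * (p - 1) + m - 1 = c) [1..<p] = filter (\<lambda>m. m = c + 1 - i * (p - 1)) [1..<p]"
        if "i * (p - 1) \<le> c"
        using that by (intro filter_cong) auto
      finally have A: "i * (p - 1) \<le> c \<Longrightarrow> filter (\<lambda>l. lab l = c) (map (\<lambda>m. GL (i * (p - 1) + m - 1) True True) [1..<p])
         = map (\<lambda>m. GL (i * (p - 1) + m - 1) True True) (filter (\<lambda>m. m = c + 1 - i * (p - 1)) [1..<p])" .
      have B: "\<not> i * (p - 1) \<le> c \<Longrightarrow> filter (\<lambda>l. lab l = c) (map (\<lambda>m. GL (i * (p - 1) + m - 1) True True) [1..<p]) = []"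
        by (auto simp: filter_empty_conv)
      have iff: "(i * (p - 1) \<le> c \<and> c < i * (p - 1) + (p - 1)) \<longleftrightarrow> c div (p - 1) = i"
      proof
        assume h: "i * (p - 1) \<le> c \<and> c < i * (p - 1) + (p - 1)"
        define j where "j = c - i * (p - 1)"
        have "c = i * (p - 1) + j" "j < p - 1" using h unfolding j_def by linarith+
        then show "c div (p - 1) = i" using divmod_unique[of j "p - 1" i] by simp
      next
        assume "c div (p - 1) = i"
        then have "c = i * (p - 1) + c mod (p - 1)" using cdec by simp
        then show "i * (p - 1) \<le> c \<and> c < i * (p - 1) + (p - 1)" using cm by linarith
      qed
      show ?thesis
      proof (cases "i * (p - 1) \<le> c")
        case le: True
        have "(1 \<le> c + 1 - i * (p - 1) \<and> c + 1 - i * (p - 1) < p) = (c div (p - 1) = i)"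
          using iff le p2 by linarith
        moreover have L: "LL n p q T = map (\<lambda>m. GL (i * (p - 1) + m - 1) True True) [1..<p]"
          using True False by (simp add: LL_def Lb_def i_def[symmetric])
        moreover have "i * (p - 1) + (c + 1 - i * (p - 1)) - 1 = c" using le by simp
        ultimately show ?thesis using A[OF le] True False unfolding filter_eq_upt i_def
          by (cases "c div (p - 1) = T mod q") simp_all
      next
        case nle: False
        have L: "LL n p q T = map (\<lambda>m. GL (i * (p - 1) + m - 1) True True) [1..<p]"
          using True False by (simp add: LL_def Lb_def i_def[symmetric])
        have "c div (p - 1) \<noteq> i" using iff nle by blast
        then show ?thesis using B[OF nle] L i_def by simp
      qed
    next
      case F: False
      have r: "T mod p < p" using p2 by simp
      have lab_eq: "(i * (p - 1) + (p - T mod p) - 1 = c) \<longleftrightarrow> (c div (p - 1) = i \<and> T mod p = p - 1 - c mod (p - 1))"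
      proof -
        have e: "i * (p - 1) + (p - T mod p) - 1 = i * (p - 1) + (p - 1 - T mod p)" using F r by simp
        have j: "p - 1 - T mod p < p - 1" using F r by simp
        show ?thesis unfolding e
        proof
          assume h: "i * (p - 1) + (p - 1 - T mod p) = c"
          then show "c div (p - 1) = i \<and> T mod p = p - 1 - c mod (p - 1)"
            using divmod_unique[OF j, of i] F r by auto
        next
          assume h: "c div (p - 1) = i \<and> T mod p = p - 1 - c mod (p - 1)"
          then have "c = i * (p - 1) + c mod (p - 1)" using cdec by simp
          moreover have "c mod (p - 1) = p - 1 - T mod p" using h cm F r by linarith
          ultimately show "i * (p - 1) + (p - 1 - T mod p) = c" by simp
        qed
      qed
      have L: "LL n p q T = [GL (i * (p - 1) + (p - T mod p) - 1) False True]"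
        using F False by (simp add: LL_def Lb_def i_def[symmetric])
      show ?thesis
      proof (cases "c div (p - 1) = i \<and> T mod p = p - 1 - c mod (p - 1)")
        case True
        then have "i * (p - 1) + (p - T mod p) - 1 = c" using lab_eq by blast
        then show ?thesis using L True False F i_def by simp
      next
        case nT: False
        then have "i * (p - 1) + (p - T mod p) - 1 \<noteq> c" using lab_eq by blast
        then show ?thesis using L nT False F i_def by auto
      qed
    qed
  qed
qed


definition Wt :: "nat \<Rightarrow> nat \<Rightarrow> nat \<Rightarrow> nat \<Rightarrow> int" where
  "Wt n p q T = (if T mod q < n then 0 else if T mod p = 0 then int p - 1 else -1)"

definition cl :: "nat \<Rightarrow> nat \<Rightarrow> nat \<Rightarrow> int" where
  "cl n q T = (if n \<le> T mod q then 1 else 0)"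

lemma period_sum:
  fixes g :: "nat \<Rightarrow> int"
  assumes "0 < q"
  shows "(\<Sum>T\<in>{a..<a + q}. g (T mod q)) = (\<Sum>r\<in>{..<q}. g r)"
proof (induction a)
  case 0
  have "(\<Sum>T\<in>{0..<q}. g (T mod q)) = (\<Sum>T\<in>{0..<q}. g T)" by (intro sum.cong) auto
  then show ?case by (simp add: atLeast0LessThan)
next
  case (Suc a)
  have "{a..<a + q} = insert a {Suc a..<a + q}" using assms by auto
  then have 1: "(\<Sum>T\<in>{a..<a + q}. g (T mod q)) = g (a mod q) + (\<Sum>T\<in>{Suc a..<a + q}. g (T mod q))"
    using assms by simp
  have "{Suc a..<Suc a + q} = insert (a + q) {Suc a..<a + q}" using assms by auto
  then have 2: "(\<Sum>T\<in>{Suc a..<Suc a + q}. g (T mod q)) = g ((a + q) mod q) + (\<Sum>T\<in>{Suc a..<a + q}. g (T mod q))"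
    by simp
  show ?case using 1 2 Suc by simp
qed

lemma cl_period: assumes "0 < q" "n \<le> q" shows "(\<Sum>T\<in>{a..<a + q}. cl n q T) = int (q - n)"
proof -
  have "(\<Sum>T\<in>{a..<a + q}. cl n q T) = (\<Sum>r\<in>{..<q}. (if n \<le> r then 1 else 0 :: int))"
    using period_sum[OF assms(1), of "\<lambda>r. if n \<le> r then 1 else 0" a] by (simp add: cl_def)
  also have "\<dots> = int (card {r\<in>{..<q}. n \<le> r})" by (simp add: sum.If_cases Int_def)
  also have "{r\<in>{..<q}. n \<le> r} = {n..<q}" by auto
  finally show ?thesis by simp
qed

lemma cl_periods: assumes "0 < q" "n \<le> q" shows "(\<Sum>T\<in>{a..<a + k * q}. cl n q T) = int k * int (q - n)"
proof (induction k)
  case 0 then show ?case by simp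
next
  case (Suc k)
  have "{a..<a + Suc k * q} = {a..<a + k * q} \<union> {a + k * q..<a + k * q + q}" by (auto simp: algebra_simps)
  then have "(\<Sum>T\<in>{a..<a + Suc k * q}. cl n q T) = (\<Sum>T\<in>{a..<a + k * q}. cl n q T) + (\<Sum>T\<in>{a + k * q..<a + k * q + q}. cl n q T)"
    by (simp add: sum.union_disjoint ivl_disj_int)
  then show ?case using Suc cl_period[OF assms, of "a + k * q"] by (simp add: algebra_simps)
qed

lemma W_cl_dvd: assumes "2 \<le> p" shows "int p dvd (\<Sum>T\<in>S. Wt n p q T + cl n q T)"
proof (rule dvd_sum)
  fix T show "int p dvd Wt n p q T + cl n q T" by (auto simp: Wt_def cl_def)
qed

lemma interval_facts:
  fixes p q n t1 t2 :: nat
  assumes p2: "2 \<le> p" and q0: "0 < q" and nq: "n \<le> q" and t: "t1 < t2" "t2 < p * q"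
    and m: "t1 mod q = t2 mod q" and cl1: "n \<le> t1 mod q"
  obtains d where "t2 - t1 = d * q" "0 < d" "d < p"
    "int p dvd (\<Sum>T\<in>{Suc t1..<t2}. Wt n p q T) + (int d * int (q - n) - 1)"
proof -
  have "q dvd t2 - t1" using m t mod_eq_dvd_iff_nat[of t1 t2 q] by simp
  then obtain d where d: "t2 - t1 = d * q" by (auto simp: dvd_def mult.commute)
  have "0 < d" using d t by (cases d) auto
  have "d * q < p * q" using d t by linarith
  then have "d < p" by simp
  have set1: "{t1..<t2} = {t1..<t1 + d * q}" using d t by auto
  have "(\<Sum>T\<in>{t1..<t2}. cl n q T) = int d * int (q - n)"
    unfolding set1 by (rule cl_periods[OF q0 nq])
  moreover have "{t1..<t2} = insert t1 {Suc t1..<t2}" using t by auto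
  moreover have "cl n q t1 = 1" using cl1 by (simp add: cl_def)
  ultimately have c: "(\<Sum>T\<in>{Suc t1..<t2}. cl n q T) = int d * int (q - n) - 1" by simp
  have "int p dvd (\<Sum>T\<in>{Suc t1..<t2}. Wt n p q T + cl n q T)" by (rule W_cl_dvd[OF p2])
  then have "int p dvd (\<Sum>T\<in>{Suc t1..<t2}. Wt n p q T) + (int d * int (q - n) - 1)"
    using c by (simp add: sum.distrib)
  then show ?thesis using that d \<open>0 < d\<close> \<open>d < p\<close> by blast
qed

lemma not_dvd_dn:
  fixes p d n :: nat
  assumes "coprime p n" "0 < d" "d < p"
  shows "\<not> int p dvd int d * int n"
proof
  assume "int p dvd int d * int n"
  then have "int p dvd int (d * n)" by simp
  then have "p dvd d * n" by (simp only: int_dvd_int_iff)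
  then have "p dvd d" using assms(1) by (simp add: coprime_dvd_mult_left_iff)
  then show False using assms(2,3) by (simp add: nat_dvd_not_less)
qed

lemma ind_over_nz:
  fixes p q n t1 t2 mm :: nat
  assumes p2: "2 \<le> p" and q0: "0 < q" and nq: "n \<le> q" and cop: "coprime p n"
    and t: "t1 < t2" "t2 < p * q"
    and m: "t1 mod q = t2 mod q" and cl1: "n \<le> t1 mod q"
    and r1: "t1 mod p = 0" and r2: "t2 mod p = p - 1 - mm" and mm: "mm < p - 1"
  shows "\<not> int p dvd (int (p - 2 - mm) + (\<Sum>T\<in>{Suc t1..<t2}. Wt n p q T))"
proof
  assume X: "int p dvd (int (p - 2 - mm) + (\<Sum>T\<in>{Suc t1..<t2}. Wt n p q T))"
  obtain d where d: "t2 - t1 = d * q" "0 < d" "d < p"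
    and dv: "int p dvd (\<Sum>T\<in>{Suc t1..<t2}. Wt n p q T) + (int d * int (q - n) - 1)"
    using interval_facts[OF p2 q0 nq t m cl1] by blast
  define S where "S = (\<Sum>T\<in>{Suc t1..<t2}. Wt n p q T)"
  have dm: "int x = int p * int (x div p) + int (x mod p)" for x
  proof -
    have "int x = int (p * (x div p) + x mod p)" by simp
    also have "\<dots> = int p * int (x div p) + int (x mod p)" by (simp only: of_nat_add of_nat_mult)
    finally show ?thesis .
  qed
  have e1: "int t1 = int p * int (t1 div p)" using dm[of t1] r1 by simp
  have r2': "int (t2 mod p) = int p - 1 - int mm" using r2 mm by linarith
  have e2: "int t2 = int p * int (t2 div p) + (int p - 1 - int mm)" using dm[of t2] r2' by simp
  have "int (t2 - t1) = int d * int q" using d by simp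
  then have e3: "int t2 - int t1 = int d * int q" using t by linarith
  have nqi: "int (q - n) = int q - int n" using nq by simp
  have pm: "int (p - 2 - mm) = int p - 2 - int mm" using mm by linarith
  have eq: "int (p - 2 - mm) + S - int d * int n =
        (S + (int d * int (q - n) - 1)) - int p * (int (t2 div p) - int (t1 div p))"
    using e1 e2 e3 unfolding nqi pm by (simp add: algebra_simps)
  have dv2: "int p dvd (S + (int d * int (q - n) - 1)) - int p * (int (t2 div p) - int (t1 div p))"
    using dv unfolding S_def by simp
  have "int p dvd int (p - 2 - mm) + S - int d * int n" unfolding eq by (rule dv2)
  from dvd_diff[OF X[unfolded S_def[symmetric]] this]
  have "int p dvd int d * int n" by simp
  then show False using not_dvd_dn[OF cop d(2,3)] by simp
qed

lemma ind_under_nz: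
  fixes p q n t1 t2 mm :: nat
  assumes p2: "2 \<le> p" and q0: "0 < q" and nq: "n \<le> q" and cop: "coprime p n"
    and t: "t1 < t2" "t2 < p * q"
    and m: "t1 mod q = t2 mod q" and cl1: "n \<le> t1 mod q"
    and r1: "t1 mod p = p - 1 - mm" and r2: "t2 mod p = 0" and mm: "mm < p - 1"
  shows "\<not> int p dvd (- ((\<Sum>T\<in>{Suc t1..<t2}. Wt n p q T) + int mm))"
proof
  assume X: "int p dvd (- ((\<Sum>T\<in>{Suc t1..<t2}. Wt n p q T) + int mm))"
  obtain d where d: "t2 - t1 = d * q" "0 < d" "d < p"
    and dv: "int p dvd (\<Sum>T\<in>{Suc t1..<t2}. Wt n p q T) + (int d * int (q - n) - 1)"
    using interval_facts[OF p2 q0 nq t m cl1] by blast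
  define S where "S = (\<Sum>T\<in>{Suc t1..<t2}. Wt n p q T)"
  have dm: "int x = int p * int (x div p) + int (x mod p)" for x
  proof -
    have "int x = int (p * (x div p) + x mod p)" by simp
    also have "\<dots> = int p * int (x div p) + int (x mod p)" by (simp only: of_nat_add of_nat_mult)
    finally show ?thesis .
  qed
  have e1: "int t2 = int p * int (t2 div p)" using dm[of t2] r2 by simp
  have r1': "int (t1 mod p) = int p - 1 - int mm" using r1 mm by linarith
  have e2: "int t1 = int p * int (t1 div p) + (int p - 1 - int mm)" using dm[of t1] r1' by simp
  have "int (t2 - t1) = int d * int q" using d by simp
  then have e3: "int t2 - int t1 = int d * int q" using t by linarith
  have nqi: "int (q - n) = int q - int n" using nq by simp
  have eq: "- (S + int mm) + int d * int n =
        int p * (int (t2 div p) - int (t1 div p) - 1) - (S + (int d * int (q - n) - 1))"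
    using e1 e2 e3 unfolding nqi by (simp add: algebra_simps)
  have dv2: "int p dvd int p * (int (t2 div p) - int (t1 div p) - 1) - (S + (int d * int (q - n) - 1))"
    using dv unfolding S_def by simp
  have "int p dvd - (S + int mm) + int d * int n" unfolding eq by (rule dv2)
  from dvd_diff[OF this X[unfolded S_def[symmetric]]]
  have "int p dvd int d * int n" by simp
  then show False using not_dvd_dn[OF cop d(2,3)] by simp
qed


lemma sumv_over: "sumv (map (\<lambda>m. GL (g m) True True) xs) = int (length xs)"
  by (induction xs) (auto simp: val_def)

lemma sumv_LL: assumes "2 \<le> p" shows "sumv (LL n p q T) = Wt n p q T"
  using assms by (auto simp: LL_def Lb_def Wt_def sumv_over val_def)

lemma sumv_concat: "sumv (concat (map g xs)) = sum_list (map (\<lambda>x. sumv (g x)) xs)"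
  by (induction xs) auto

lemma sumv_concat_upt: assumes "2 \<le> p"
  shows "sumv (concat (map (LL n p q) [a..<b])) = (\<Sum>T\<in>{a..<b}. Wt n p q T)"
proof -
  have "sumv (concat (map (LL n p q) [a..<b])) = sum_list (map (Wt n p q) [a..<b])"
    unfolding sumv_concat using sumv_LL[OF assms] by (simp add: comp_def)
  also have "\<dots> = (\<Sum>T\<in>{a..<b}. Wt n p q T)"
    by (simp add: sum_list_distinct_conv_sum_set)
  finally show ?thesis .
qed

lemma concat_split:
  assumes "t1 < t2" "t2 < N"
  shows "concat (map g [0..<N]) = concat (map g [0..<t1]) @ g t1 @ concat (map g [Suc t1..<t2]) @ g t2 @ concat (map g [Suc t2..<N])"
proof -
  have "[0..<N] = [0..<t1] @ [t1..<N]" using assms upt_add_eq_append[of 0 t1 "N - t1"] by simp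
  moreover have "[t1..<N] = t1 # [Suc t1..<N]" using assms by (simp add: upt_conv_Cons)
  moreover have "[Suc t1..<N] = [Suc t1..<t2] @ [t2..<N]" using assms upt_add_eq_append[of "Suc t1" t2 "N - t2"] by simp
  moreover have "[t2..<N] = t2 # [Suc t2..<N]" using assms by (simp add: upt_conv_Cons)
  ultimately have "[0..<N] = [0..<t1] @ t1 # [Suc t1..<t2] @ t2 # [Suc t2..<N]" by simp
  then show ?thesis by (simp only: map_append concat_append list.map concat.simps append_assoc)
qed

lemma filter_concat_empty:
  assumes "\<forall>T\<in>set xs. filter P (g T) = []"
  shows "filter P (concat (map g xs)) = []"
  using assms by (induction xs) auto

lemma labels_concat_empty:
  assumes "\<forall>T\<in>set xs. filter (\<lambda>l. lab l = c) (g T) = []"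
  shows "c \<notin> labels (concat (map g xs))"
  using filter_concat_empty[OF assms] by (rule filter0)


definition CC :: "nat \<Rightarrow> nat \<Rightarrow> nat \<Rightarrow> gcode" where "CC n p q = concat (map (LL n p q) [0..<p * q])"

context
  fixes n p q :: nat
  assumes p2: "2 \<le> p" and q0: "0 < q" and cop: "coprime p q" and nq: "n \<le> q" and copn: "coprime p n"
begin

lemma filter_out_range:
  assumes "\<not> (n \<le> c div (p - 1) \<and> c div (p - 1) < q)" "T < p * q"
  shows "filter (\<lambda>l. lab l = c) (LL n p q T) = []"
proof -
  have "T mod q < q" using q0 by simp
  then show ?thesis using assms filter_LL[OF p2, of c n q T] by auto
qed

lemma in_range_times:
  assumes r: "n \<le> c div (p - 1)" "c div (p - 1) < q"
  obtains To Tu where "To < p * q" "Tu < p * q" "To \<noteq> Tu"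
    "To mod p = 0" "To mod q = c div (p - 1)" "Tu mod p = p - 1 - c mod (p - 1)" "Tu mod q = c div (p - 1)"
    "\<And>T. T < p * q \<Longrightarrow> filter (\<lambda>l. lab l = c) (LL n p q T) =
       (if T = To then [GL c True True] else if T = Tu then [GL c False True] else [])"
proof -
  have mm: "c mod (p - 1) < p - 1" using p2 by simp
  obtain To where To: "To < p * q" "To mod p = 0" "To mod q = c div (p - 1)"
    using crt_exists[OF cop, of 0 "c div (p - 1)"] p2 q0 r by auto
  obtain Tu where Tu: "Tu < p * q" "Tu mod p = p - 1 - c mod (p - 1)" "Tu mod q = c div (p - 1)"
    using crt_exists[OF cop, of "p - 1 - c mod (p - 1)" "c div (p - 1)"] p2 q0 r by auto
  have ne: "To \<noteq> Tu" using To Tu mm by auto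
  have f: "filter (\<lambda>l. lab l = c) (LL n p q T) =
       (if T = To then [GL c True True] else if T = Tu then [GL c False True] else [])" if T: "T < p * q" for T
  proof -
    have A1: "T mod q = c div (p - 1) \<longrightarrow> T mod p = 0 \<longrightarrow> T = To"
      using crt_unique[OF cop T To(1)] To by simp
    have A2: "T mod q = c div (p - 1) \<longrightarrow> T mod p = p - 1 - c mod (p - 1) \<longrightarrow> T = Tu"
      using crt_unique[OF cop T Tu(1)] Tu by simp
    have Tu0: "Tu mod p \<noteq> 0" using Tu mm by simp
    have FL: "filter (\<lambda>l. lab l = c) (LL n p q T) =
      (if T mod q = c div (p - 1) \<and> n \<le> c div (p - 1) then
       (if T mod p = 0 then [GL c True True] else if T mod p = p - 1 - c mod (p - 1) then [GL c False True] else [])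
       else [])" by (rule filter_LL[OF p2])
    show ?thesis
    proof (cases "T = To")
      case True
      then show ?thesis using FL To r by simp
    next
      case nTo: False
      show ?thesis
      proof (cases "T = Tu")
        case True
        then show ?thesis using FL Tu r nTo Tu0 by simp
      next
        case nTu: False
        show ?thesis
        proof (cases "T mod q = c div (p - 1)")
          case True
          then have "T mod p \<noteq> 0" "T mod p \<noteq> p - 1 - c mod (p - 1)" using A1 A2 nTo nTu by auto
          then show ?thesis using FL nTo nTu by simp
        next
          case False
          then show ?thesis using FL nTo nTu by simp
        qed
      qed
    qed
  qed
  show ?thesis by (rule that[OF To(1) Tu(1) ne To(2,3) Tu(2,3) f])
qed


lemma concat_map_empty: "\<forall>T\<in>set xs. g T = [] \<Longrightarrow> concat (map g xs) = []"
  by (induction xs) auto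

lemma filter_CC_out:
  assumes "\<not> (n \<le> c div (p - 1) \<and> c div (p - 1) < q)"
  shows "filter (\<lambda>l. lab l = c) (CC n p q) = []"
  unfolding CC_def by (rule filter_concat_empty) (use filter_out_range[OF assms] in auto)

lemma filter_CC_in:
  assumes r: "n \<le> c div (p - 1)" "c div (p - 1) < q"
  shows "pairok c (filter (\<lambda>l. lab l = c) (CC n p q))"
proof -
  obtain To Tu where T: "To < p * q" "Tu < p * q" "To \<noteq> Tu"
    and f: "\<And>T. T < p * q \<Longrightarrow> filter (\<lambda>l. lab l = c) (LL n p q T) =
       (if T = To then [GL c True True] else if T = Tu then [GL c False True] else [])"
    using in_range_times[OF r] by metis
  define g where "g T = filter (\<lambda>l. lab l = c) (LL n p q T)" for T
  have fc: "filter (\<lambda>l. lab l = c) (CC n p q) = concat (map g [0..<p * q])"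
    unfolding CC_def g_def by (simp add: filter_concat comp_def)
  have z: "concat (map g [a..<b]) = []" if "b \<le> p * q" "To \<notin> {a..<b}" "Tu \<notin> {a..<b}" for a b
    using that f by (intro concat_map_empty) (auto simp: g_def)
  show ?thesis
  proof (cases "To < Tu")
    case True
    have z1: "concat (map g [0..<To]) = []" "concat (map g [Suc To..<Tu]) = []"
      "concat (map g [Suc Tu..<p * q]) = []"
      by (rule z; use T True in auto)+
    have "filter (\<lambda>l. lab l = c) (CC n p q) = [GL c True True, GL c False True]"
      unfolding fc concat_split[OF True T(2)] z1 using T True
      by (simp add: g_def f)
    then show ?thesis unfolding pairok_def by auto
  next
    case False
    then have lt: "Tu < To" using T by simp
    have z1: "concat (map g [0..<Tu]) = []" "concat (map g [Suc Tu..<To]) = []"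
      "concat (map g [Suc To..<p * q]) = []"
      by (rule z; use T lt in auto)+
    have "filter (\<lambda>l. lab l = c) (CC n p q) = [GL c False True, GL c True True]"
      unfolding fc concat_split[OF lt T(1)] z1 using T lt
      by (simp add: g_def f)
    then show ?thesis unfolding pairok_def by (intro exI[of _ False] exI[of _ True]) simp
  qed
qed

lemma labels_CC: "labels (CC n p q) = {c. n \<le> c div (p - 1) \<and> c div (p - 1) < q}"
proof
  show "labels (CC n p q) \<subseteq> {c. n \<le> c div (p - 1) \<and> c div (p - 1) < q}"
    using filter_CC_out by (auto simp: labels_def filter_empty_conv)
  show "{c. n \<le> c div (p - 1) \<and> c div (p - 1) < q} \<subseteq> labels (CC n p q)"
  proof
    fix c assume "c \<in> {c. n \<le> c div (p - 1) \<and> c div (p - 1) < q}"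
    then have "pairok c (filter (\<lambda>l. lab l = c) (CC n p q))" using filter_CC_in by auto
    then have "filter (\<lambda>l. lab l = c) (CC n p q) \<noteq> []" by (auto simp: pairok_def)
    then show "c \<in> labels (CC n p q)" by (auto simp: labels_def filter_empty_conv)
  qed
qed

lemma ind_CC_nz:
  assumes r: "n \<le> c div (p - 1)" "c div (p - 1) < q"
  shows "ind (CC n p q) c \<noteq> 0"
proof -
  obtain To Tu where T: "To < p * q" "Tu < p * q" "To \<noteq> Tu"
    "To mod p = 0" "To mod q = c div (p - 1)" "Tu mod p = p - 1 - c mod (p - 1)" "Tu mod q = c div (p - 1)"
    and f: "\<And>T. T < p * q \<Longrightarrow> filter (\<lambda>l. lab l = c) (LL n p q T) =
       (if T = To then [GL c True True] else if T = Tu then [GL c False True] else [])"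
    by (rule in_range_times[OF r]) (rule that)
  define i where "i = c div (p - 1)"
  define mm where "mm = c mod (p - 1)"
  have mm1: "mm < p - 1" unfolding mm_def using p2 by simp
  have cdec: "c = i * (p - 1) + mm" unfolding i_def mm_def by (rule div_mult_mod_eq[symmetric])
  define fo where "fo m = GL (i * (p - 1) + m - 1) True True" for m
  define pre where "pre = map fo [1..<Suc mm]"
  define post where "post = map fo [Suc (Suc mm)..<p]"
  have LTo: "LL n p q To = pre @ GL c True True # post"
  proof -
    have "LL n p q To = map fo [1..<p]"
      using T(4,5) r unfolding LL_def Lb_def fo_def i_def by simp
    moreover have "[1..<p] = [1..<Suc mm] @ Suc mm # [Suc (Suc mm)..<p]"
      using mm1 upt_add_eq_append[of 1 "Suc mm" "p - Suc mm"] by (simp add: upt_conv_Cons)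
    moreover have "fo (Suc mm) = GL c True True" unfolding fo_def using cdec by simp
    ultimately show ?thesis unfolding pre_def post_def by simp
  qed
  have LTu: "LL n p q Tu = [GL c False True]"
  proof -
    have "filter (\<lambda>l. lab l = c) (LL n p q Tu) = [GL c False True]" using f[OF T(2)] T(3) by simp
    moreover have "Tu mod p \<noteq> 0" using T(6) mm1 unfolding mm_def by simp
    then have "length (LL n p q Tu) = 1"
      using T(7) r unfolding LL_def Lb_def by simp
    ultimately show ?thesis by (cases "LL n p q Tu") (auto split: if_splits)
  qed
  have npre: "c \<notin> labels pre" unfolding pre_def fo_def labels_def using cdec by auto
  have npost: "c \<notin> labels post" unfolding post_def fo_def labels_def using cdec by auto
  have lpost: "sumv post = int (p - 2 - mm)" unfolding post_def fo_def
    using sumv_over[of "\<lambda>m. i * (p - 1) + m - 1"] by simp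
  have lpre: "sumv pre = int mm" unfolding pre_def fo_def
    using sumv_over[of "\<lambda>m. i * (p - 1) + m - 1"] by simp
  have nX: "c \<notin> labels (concat (map (LL n p q) [a..<b]))"
    if "b \<le> p * q" "To \<notin> {a..<b}" "Tu \<notin> {a..<b}" for a b
    using that f by (intro labels_concat_empty) auto
  have imod: "n \<le> To mod q" using T(5) r by simp
  have imodu: "n \<le> Tu mod q" using T(7) r by simp
  have mq: "To mod q = Tu mod q" using T(5,7) by simp
  have rTu: "Tu mod p = p - 1 - mm" using T(6) unfolding mm_def .
  show ?thesis
  proof (cases "To < Tu")
    case True
    have n1: "c \<notin> labels (concat (map (LL n p q) [0..<To]))" "c \<notin> labels (concat (map (LL n p q) [Suc To..<Tu]))"
      by (rule nX; use T True in auto)+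
    have "(CC n p q) = (concat (map (LL n p q) [0..<To]) @ pre) @ GL c True True # (post @ concat (map (LL n p q) [Suc To..<Tu]))
       @ GL c False True # concat (map (LL n p q) [Suc Tu..<p * q])"
      unfolding CC_def concat_split[OF True T(2)] LTo LTu by simp
    then have "ind (CC n p q) c = sumv (post @ concat (map (LL n p q) [Suc To..<Tu]))"
      using ind_decomp[of c "concat (map (LL n p q) [0..<To]) @ pre" "post @ concat (map (LL n p q) [Suc To..<Tu])"
          "GL c True True" "GL c False True" "concat (map (LL n p q) [Suc Tu..<p * q])"] n1 npre npost by simp
    also have "\<dots> = int (p - 2 - mm) + (\<Sum>T\<in>{Suc To..<Tu}. Wt n p q T)"
      using lpost sumv_concat_upt[OF p2] by simp
    finally have "ind (CC n p q) c = int (p - 2 - mm) + (\<Sum>T\<in>{Suc To..<Tu}. Wt n p q T)" .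
    moreover have "\<not> int p dvd (int (p - 2 - mm) + (\<Sum>T\<in>{Suc To..<Tu}. Wt n p q T))"
      by (rule ind_over_nz[OF p2 q0 nq copn True T(2) mq imod T(4) rTu mm1])
    ultimately show ?thesis by auto
  next
    case False
    then have lt: "Tu < To" using T by simp
    have n1: "c \<notin> labels (concat (map (LL n p q) [0..<Tu]))" "c \<notin> labels (concat (map (LL n p q) [Suc Tu..<To]))"
      by (rule nX; use T lt in auto)+
    have "(CC n p q) = concat (map (LL n p q) [0..<Tu]) @ GL c False True # (concat (map (LL n p q) [Suc Tu..<To]) @ pre)
       @ GL c True True # (post @ concat (map (LL n p q) [Suc To..<p * q]))"
      unfolding CC_def concat_split[OF lt T(1)] LTo LTu by simp
    then have "ind (CC n p q) c = - sumv (concat (map (LL n p q) [Suc Tu..<To]) @ pre)"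
      using ind_decomp[of c "concat (map (LL n p q) [0..<Tu])" "concat (map (LL n p q) [Suc Tu..<To]) @ pre"
          "GL c False True" "GL c True True" "post @ concat (map (LL n p q) [Suc To..<p * q])"] n1 npre by simp
    also have "\<dots> = - ((\<Sum>T\<in>{Suc Tu..<To}. Wt n p q T) + int mm)"
      using lpre sumv_concat_upt[OF p2] by simp
    finally have "ind (CC n p q) c = - ((\<Sum>T\<in>{Suc Tu..<To}. Wt n p q T) + int mm)" .
    moreover have "\<not> int p dvd (- ((\<Sum>T\<in>{Suc Tu..<To}. Wt n p q T) + int mm))"
      by (rule ind_under_nz[OF p2 q0 nq copn lt T(1) mq[symmetric] imodu rTu T(4) mm1])
    ultimately show ?thesis by auto
  qed
qed

lemma wf_CC: "wf (CC n p q)"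
  unfolding wf_pairok labels_CC using filter_CC_in by auto

lemma positive_CC: "\<forall>l\<in>set (CC n p q). positive l"
  unfolding CC_def by (auto simp: LL_def Lb_def)

lemma NN_CC: "NN (CC n p q) = int (card (labels (CC n p q)))"
proof -
  have "NN (CC n p q) = (\<Sum>c\<in>labels (CC n p q). sum_list (map (Nf (CC n p q)) (filter (\<lambda>l. lab l = c) (CC n p q))))"
    unfolding NN_def by (rule sum_by_label) auto
  also have "\<dots> = (\<Sum>c\<in>labels (CC n p q). 1)"
  proof (rule sum.cong[OF HOL.refl])
    fix c assume c: "c \<in> labels (CC n p q)"
    then have r: "n \<le> c div (p - 1)" "c div (p - 1) < q" using labels_CC by auto
    obtain ov s where fs: "filter (\<lambda>l. lab l = c) (CC n p q) = [GL c ov s, GL c (\<not> ov) s]"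
      using filter_CC_in[OF r] by (auto simp: pairok_def)
    have "GL c ov s \<in> set (filter (\<lambda>l. lab l = c) (CC n p q))" unfolding fs by simp
    then have "GL c ov s \<in> set (CC n p q)" by simp
    then have s: "s" using positive_CC by auto
    show "sum_list (map (Nf (CC n p q)) (filter (\<lambda>l. lab l = c) (CC n p q))) = 1"
      unfolding fs using ind_CC_nz[OF r] s by (cases ov) (auto simp: Nf_def sg_def)
  qed
  finally show ?thesis by simp
qed

lemma card_labels_CC: "card (labels (CC n p q)) = (p - 1) * (q - n)"
proof -
  have "labels (CC n p q) = {n * (p - 1)..<q * (p - 1)}"
  proof -
    have k: "0 < p - 1" using p2 by simp
    show ?thesis unfolding labels_CC
      using less_eq_div_iff_mult_less_eq[OF k] div_less_iff_less_mult[OF k] by auto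
  qed
  then show ?thesis by (simp add: diff_mult_distrib mult.commute)
qed

end


theorem lemma5p1:
  fixes p q n :: nat
  assumes "p \<ge> 1" and "q \<ge> 1" and "coprime p q"
    and "1 \<le> n" and "n \<le> q" and "coprime p n"
  shows "enat ((p - 1) * (q - n)) \<le> 2 * vu (VT n p q)"
proof (cases "p = 1 \<or> n = q")
  case True
  then have "(p - 1) * (q - n) = 0" by auto
  then have "enat ((p - 1) * (q - n)) = 0" by (simp add: zero_enat_def)
  then show ?thesis by simp
next
  case False
  then have p2: "2 \<le> p" using assms(1) by simp
  have q0: "0 < q" using assms(2) by simp
  have VT: "VT n p q = CC n p q" using VT_eq[OF p2 assms(2)] by (simp add: CC_def)
  have wf: "wf (CC n p q)" by (rule wf_CC[OF p2 q0 assms(3) assms(5) assms(6)])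
  have "NN (CC n p q) = int ((p - 1) * (q - n))"
    using NN_CC[OF p2 q0 assms(3) assms(5) assms(6)] card_labels_CC[OF p2 q0 assms(3) assms(5) assms(6)] by simp
  then show ?thesis unfolding VT using vu_bound[OF wf] by simp
qed


end
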